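(* Let $H_1,H_2,K$ be Hilbert spaces, $H:=H_1\otimes H_2$, $\mathcal H:=K\otimes H$, and $\{e_i\}_{i\in I}$ an orthonormal basis of $K$. Let $w\in\mathcal H\setminus\{0\}$, $T:=\theta_{w,w}$, and write $w=\sum_{i\in I}e_i\otimes u_i$ with $u_i\in H$. Let $\widetilde{\mathcal H}$ be a Hilbert space and $A\in\mathcal B_2(\widetilde{\mathcal H},H_1)$, $B\in\mathcal B_2(\widetilde{\mathcal H}^\#,H_2)$ nonzero. Set $\rho:=\sum_{i\in I}\langle\mathrm{vec}(BA^\#),u_i\rangle_H\,e_i$. Then $\rho\in K$ with $\|\rho\|\le\|A\|_2\|B\|_2\sqrt{\|T\|_2}$, and for $\star=\star(T)$, \[ AA^*\star BB^*\;\succcurlyeq\;\frac{1}{\min(\operatorname{rk}AA^*,\operatorname{rk}BB^*,\mathbf r(\star))}\,\theta_{\rho,\rho}\;\succcurlyeq\;0, \] with the convention $1/\infty:=0$, where $\mathcal U(\star):=\overline{\operatorname{span}}^{\mathcal B_2}\{\mathrm{vec}^{-1}(u_i):i\in I\}\subset\mathcal B_2(H_1^\#,H_2)$ and $\mathbf r(\star):=\sup\{\operatorname{rk}X:X\in\mathcal U(\star)\}$. Moreover, the scalar $1/\min(\operatorname{rk}AA^*,\operatorname{rk}BB^*,\mathbf r(\star))$ is the best possible universal constant, i.e., it cannot be improved uniformly over all $A,B$.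
   Context: Hilbert spaces are complex, inner products linear in the first variable. $\mathcal B_2$ denotes Hilbert–Schmidt operators (norm $\|\cdot\|_2$, inner product $\operatorname{Tr}(XY^* )$). $\theta_{x,y}w:=\langle w,y\rangle x$. Conjugate space $H^\#$: same additive group as $H$, scalar multiplication $\lambda\ast y=\bar\lambda y$, inner product $\langle x,y\rangle_{H^\#}=\langle y,x\rangle_H$; $\mathcal C_H:H\to H^\#$, $y\mapsto\bar y$, is the identity on the underlying set. For $Q\in\mathcal B(K,H)$, $Q^\#:=\mathcal C_KQ^*\mathcal C_H^{-1}:H^\#\to K^\#$. $\mathrm{vec}:\mathcal B_2(H_1^\#,H_2)\to H_1\otimes H_2$ is the isometric isomorphism with $\mathrm{vec}(\theta_{y,\bar x})=x\otimes y$. $\operatorname{rk}$ = dimension of closure of range. Slices: $T_{u,v}\in\mathcal B(H)$ defined by $\langle T_{u,v}\eta,\xi\rangle_H=\langle T(v\otimes\eta),u\otimes\xi\rangle_{\mathcal H}$; $T_{ij}:=T_{e_i,e_j}$. The product $\star=\star(T)$ sends $P\in\mathcal B_2(H_1)$, $Q\in\mathcal B_2(H_2)$ to the operator on $K$ with matrix entries $\langle (P\star Q)e_j,e_i\rangle_K=\operatorname{Tr}((P\otimes Q)T_{ij}^* )$. $X\succcurlyeq Y$ means $X-Y$ is a positive operator. *)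

theory Defs
  imports "HOL-Analysis.Analysis" "HOL-Library.Extended_Nat"
begin

text \<open>Concrete model: every complex Hilbert space is unitarily equivalent to l2 over an
index set; we model the Hilbert spaces as l2 over (arbitrary) types. Bounded / Hilbert-Schmidt
operators are represented by their kernels (matrices w.r.t. the standard bases).\<close>

definition l2 :: "('a \<Rightarrow> complex) set" where
  "l2 = {f. (\<lambda>x. (cmod (f x))^2) summable_on UNIV}"

definition linner :: "('a \<Rightarrow> complex) \<Rightarrow> ('a \<Rightarrow> complex) \<Rightarrow> complex" where
  "linner f g = infsum (\<lambda>x. f x * cnj (g x)) UNIV"

definition lnorm :: "('a \<Rightarrow> complex) \<Rightarrow> real" where
  "lnorm f = sqrt (infsum (\<lambda>x. (cmod (f x))^2) UNIV)"

definition onb :: "('i \<Rightarrow> ('k \<Rightarrow> complex)) \<Rightarrow> bool" where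
  "onb e \<longleftrightarrow> (\<forall>i. e i \<in> l2) \<and> (\<forall>i j. linner (e i) (e j) = (if i = j then 1 else 0))
     \<and> (\<forall>v\<in>l2. (\<forall>i. linner v (e i) = 0) \<longrightarrow> v = (\<lambda>_. 0))"

text \<open>Kernels: X p q is the matrix entry; the operator maps l2('q) to l2('p).\<close>
definition kapply :: "('p \<Rightarrow> 'q \<Rightarrow> complex) \<Rightarrow> ('q \<Rightarrow> complex) \<Rightarrow> ('p \<Rightarrow> complex)" where
  "kapply X v = (\<lambda>p. infsum (\<lambda>q. X p q * v q) UNIV)"

definition hs :: "('p \<Rightarrow> 'q \<Rightarrow> complex) \<Rightarrow> bool" where
  "hs X \<longleftrightarrow> (\<lambda>(p, q). (cmod (X p q))^2) summable_on UNIV"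

definition hs_norm :: "('p \<Rightarrow> 'q \<Rightarrow> complex) \<Rightarrow> real" where
  "hs_norm X = sqrt (infsum (\<lambda>(p, q). (cmod (X p q))^2) UNIV)"

definition hs_inner :: "('p \<Rightarrow> 'q \<Rightarrow> complex) \<Rightarrow> ('p \<Rightarrow> 'q \<Rightarrow> complex) \<Rightarrow> complex" where
  "hs_inner X Y = infsum (\<lambda>(p, q). X p q * cnj (Y p q)) UNIV"

definition kadj :: "('p \<Rightarrow> 'q \<Rightarrow> complex) \<Rightarrow> ('q \<Rightarrow> 'p \<Rightarrow> complex)" where
  "kadj X = (\<lambda>q p. cnj (X p q))"

definition kcomp :: "('p \<Rightarrow> 'r \<Rightarrow> complex) \<Rightarrow> ('r \<Rightarrow> 'q \<Rightarrow> complex) \<Rightarrow> ('p \<Rightarrow> 'q \<Rightarrow> complex)" where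
  "kcomp X Y = (\<lambda>p q. infsum (\<lambda>r. X p r * Y r q) UNIV)"

text \<open>Conjugate spaces: l2('c)^# is identified with l2('c) via the unitary f \<mapsto> cnj \<circ> f.
Under these identifications Q^# = C Q^* C^{-1} has kernel the transpose of the kernel of Q.\<close>
definition ksharp :: "('p \<Rightarrow> 'q \<Rightarrow> complex) \<Rightarrow> ('q \<Rightarrow> 'p \<Rightarrow> complex)" where
  "ksharp X = (\<lambda>q p. X p q)"

text \<open>vec : B_2(H1^#, H2) \<rightarrow> H1 \<otimes> H2 with vec(theta_{y, conj x}) = x \<otimes> y.\<close>
definition kvec :: "('b \<Rightarrow> 'a \<Rightarrow> complex) \<Rightarrow> ('a \<times> 'b \<Rightarrow> complex)" where
  "kvec X = (\<lambda>(a, b). X b a)"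

definition kunvec :: "('a \<times> 'b \<Rightarrow> complex) \<Rightarrow> ('b \<Rightarrow> 'a \<Rightarrow> complex)" where
  "kunvec z = (\<lambda>b a. z (a, b))"

text \<open>theta_{x,y} v = <v,y> x.\<close>
definition theta :: "('p \<Rightarrow> complex) \<Rightarrow> ('p \<Rightarrow> complex) \<Rightarrow> ('p \<Rightarrow> 'p \<Rightarrow> complex)" where
  "theta x y = (\<lambda>p q. x p * cnj (y q))"

definition ktensor :: "('a \<Rightarrow> 'a \<Rightarrow> complex) \<Rightarrow> ('b \<Rightarrow> 'b \<Rightarrow> complex)
    \<Rightarrow> ('a \<times> 'b \<Rightarrow> 'a \<times> 'b \<Rightarrow> complex)" where
  "ktensor P Q = (\<lambda>(a, b) (a', b'). P a a' * Q b b')"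

text \<open>The vectors u_i in H with w = \<Sum>_i e_i \<otimes> u_i.\<close>
definition coeff_vec :: "('i \<Rightarrow> ('k \<Rightarrow> complex)) \<Rightarrow> ('k \<times> 'h \<Rightarrow> complex) \<Rightarrow> 'i \<Rightarrow> ('h \<Rightarrow> complex)" where
  "coeff_vec e w i = (\<lambda>h. infsum (\<lambda>k. cnj (e i k) * w (k, h)) UNIV)"

text \<open>Slice T_{u,v}: <T_{u,v} eta, xi> = <T (v \<otimes> eta), u \<otimes> xi>.\<close>
definition slice :: "('k \<times> 'h \<Rightarrow> 'k \<times> 'h \<Rightarrow> complex) \<Rightarrow> ('k \<Rightarrow> complex) \<Rightarrow> ('k \<Rightarrow> complex)
    \<Rightarrow> ('h \<Rightarrow> 'h \<Rightarrow> complex)" where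
  "slice T u v = (\<lambda>h h'. infsum (\<lambda>k. infsum (\<lambda>k'. cnj (u k) * T (k, h) (k', h') * v k') UNIV) UNIV)"

text \<open>Matrix of P \<star> Q w.r.t. the basis e: entry (i,j) is <(P \<star> Q) e_j, e_i> = Tr((P\<otimes>Q) T_ij^*).\<close>
definition star :: "('k \<times> ('a \<times> 'b) \<Rightarrow> 'k \<times> ('a \<times> 'b) \<Rightarrow> complex) \<Rightarrow> ('i \<Rightarrow> ('k \<Rightarrow> complex))
    \<Rightarrow> ('a \<Rightarrow> 'a \<Rightarrow> complex) \<Rightarrow> ('b \<Rightarrow> 'b \<Rightarrow> complex) \<Rightarrow> ('i \<Rightarrow> 'i \<Rightarrow> complex)" where
  "star T e P Q = (\<lambda>i j. hs_inner (ktensor P Q) (slice T (e i) (e j)))"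

text \<open>Coefficients rho_i = <vec(B A^#), u_i> of rho = \<Sum>_i rho_i e_i.\<close>
definition rho :: "('i \<Rightarrow> ('k \<Rightarrow> complex)) \<Rightarrow> ('k \<times> ('a \<times> 'b) \<Rightarrow> complex)
    \<Rightarrow> ('a \<Rightarrow> 'c \<Rightarrow> complex) \<Rightarrow> ('b \<Rightarrow> 'c \<Rightarrow> complex) \<Rightarrow> 'i \<Rightarrow> complex" where
  "rho e w A B = (\<lambda>i. linner (kvec (kcomp B (ksharp A))) (coeff_vec e w i))"

text \<open>Matrix of theta_{rho,rho} w.r.t. e, given the coordinates r_i = <rho, e_i>.\<close>
definition theta_coord :: "('i \<Rightarrow> complex) \<Rightarrow> ('i \<Rightarrow> 'i \<Rightarrow> complex)" where
  "theta_coord r = (\<lambda>i j. r i * cnj (r j))"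

definition qform :: "('i \<Rightarrow> 'i \<Rightarrow> complex) \<Rightarrow> 'i set \<Rightarrow> ('i \<Rightarrow> complex) \<Rightarrow> complex" where
  "qform M F c = (\<Sum>i\<in>F. \<Sum>j\<in>F. cnj (c i) * M i j * c j)"

text \<open>The matrix defines a bounded operator on K.\<close>
definition bounded_form :: "('i \<Rightarrow> 'i \<Rightarrow> complex) \<Rightarrow> bool" where
  "bounded_form M \<longleftrightarrow> (\<exists>C. \<forall>F c d. finite F \<longrightarrow>
     cmod (\<Sum>i\<in>F. \<Sum>j\<in>F. cnj (d i) * M i j * c j)
       \<le> C * sqrt (\<Sum>i\<in>F. (cmod (c i))^2) * sqrt (\<Sum>i\<in>F. (cmod (d i))^2))"

text \<open>X \<succeq> Y : X - Y is positive (tested on the dense span of the basis).\<close>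
definition opge :: "('i \<Rightarrow> 'i \<Rightarrow> complex) \<Rightarrow> ('i \<Rightarrow> 'i \<Rightarrow> complex) \<Rightarrow> bool" where
  "opge M N \<longleftrightarrow> (\<forall>F c. finite F \<longrightarrow>
     Im (qform (\<lambda>i j. M i j - N i j) F c) = 0 \<and> Re (qform (\<lambda>i j. M i j - N i j) F c) \<ge> 0)"

definition lin_indep_fun :: "('p \<Rightarrow> complex) set \<Rightarrow> bool" where
  "lin_indep_fun S \<longleftrightarrow> (\<forall>c. (\<lambda>p. \<Sum>s\<in>S. c s * s p) = (\<lambda>_. 0) \<longrightarrow> (\<forall>s\<in>S. c s = 0))"

definition krank :: "('p \<Rightarrow> 'q \<Rightarrow> complex) \<Rightarrow> enat" where
  "krank X = Sup {enat (card S) | S. finite S \<and> S \<subseteq> kapply X ` l2 \<and> lin_indep_fun S}"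

text \<open>U(\<star>), as a subset of H1 \<otimes> H2 via vec: closed span of the u_i.\<close>
definition Uspace :: "('i \<Rightarrow> ('k \<Rightarrow> complex)) \<Rightarrow> ('k \<times> ('a \<times> 'b) \<Rightarrow> complex) \<Rightarrow> ('a \<times> 'b \<Rightarrow> complex) set" where
  "Uspace e w = {z \<in> l2. \<forall>\<epsilon>>0. \<exists>F c. finite F \<and>
      lnorm (\<lambda>h. z h - (\<Sum>i\<in>F. c i * coeff_vec e w i h)) < \<epsilon>}"

definition rstar :: "('i \<Rightarrow> ('k \<Rightarrow> complex)) \<Rightarrow> ('k \<times> ('a \<times> 'b) \<Rightarrow> complex) \<Rightarrow> enat" where
  "rstar e w = Sup ((\<lambda>z. krank (kunvec z)) ` Uspace e w)"

definition inv_enat :: "enat \<Rightarrow> real" where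
  "inv_enat n = (case n of enat m \<Rightarrow> 1 / real m | \<infinity> \<Rightarrow> 0)"

definition bound_const :: "('i \<Rightarrow> ('k \<Rightarrow> complex)) \<Rightarrow> ('k \<times> ('a \<times> 'b) \<Rightarrow> complex)
    \<Rightarrow> ('a \<Rightarrow> 'c \<Rightarrow> complex) \<Rightarrow> ('b \<Rightarrow> 'c \<Rightarrow> complex) \<Rightarrow> real" where
  "bound_const e w A B = inv_enat (min (krank (kcomp A (kadj A)))
      (min (krank (kcomp B (kadj B))) (rstar e w)))"

definition star_ineq :: "('i \<Rightarrow> ('k \<Rightarrow> complex)) \<Rightarrow> ('k \<times> ('a \<times> 'b) \<Rightarrow> complex)
    \<Rightarrow> ('a \<Rightarrow> 'c \<Rightarrow> complex) \<Rightarrow> ('b \<Rightarrow> 'c \<Rightarrow> complex) \<Rightarrow> real \<Rightarrow> bool" where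
  "star_ineq e w A B c \<longleftrightarrow> opge (star (theta w w) e (kcomp A (kadj A)) (kcomp B (kadj B)))
      (\<lambda>i j. complex_of_real c * theta_coord (rho e w A B) i j)"

end

theory Submission
  imports Defs
begin


lemma summable_on_sum_fin:
  fixes f :: "'s \<Rightarrow> 'x \<Rightarrow> 'b::{topological_comm_monoid_add}"
  assumes "finite S" "\<And>s. s \<in> S \<Longrightarrow> f s summable_on A"
  shows "(\<lambda>x. \<Sum>s\<in>S. f s x) summable_on A"
  using assms
proof (induction S rule: finite_induct)
  case empty then show ?case by simp
next
  case (insert s S)
  then show ?case by (simp add: summable_on_add)
qed

lemma infsum_sum_fin:
  fixes f :: "'s \<Rightarrow> 'x \<Rightarrow> 'b::{topological_comm_monoid_add, t2_space}"
  assumes "finite S" "\<And>s. s \<in> S \<Longrightarrow> f s summable_on A"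
  shows "infsum (\<lambda>x. \<Sum>s\<in>S. f s x) A = (\<Sum>s\<in>S. infsum (f s) A)"
  using assms
proof (induction S rule: finite_induct)
  case empty then show ?case by simp
next
  case (insert s S)
  have "infsum (\<lambda>x. \<Sum>s\<in>insert s S. f s x) A = infsum (\<lambda>x. f s x + (\<Sum>s\<in>S. f s x)) A"
    using insert by simp
  also have "\<dots> = infsum (f s) A + infsum (\<lambda>x. \<Sum>s\<in>S. f s x) A"
    using insert.prems insert.hyps by (intro infsum_add summable_on_sum_fin) auto
  finally show ?case using insert by simp
qed

lemma summable_on_diff':
  fixes f g :: "'x \<Rightarrow> 'b::{topological_ab_group_add}"
  assumes "f summable_on A" "g summable_on A"
  shows "(\<lambda>x. f x - g x) summable_on A"
  using summable_on_add[OF assms(1) summable_on_uminus[THEN iffD2, OF assms(2)]] by simp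

lemma infsum_diff':
  fixes f g :: "'x \<Rightarrow> 'b::{topological_ab_group_add, t2_space}"
  assumes "f summable_on A" "g summable_on A"
  shows "infsum (\<lambda>x. f x - g x) A = infsum f A - infsum g A"
  using infsum_add[OF assms(1) summable_on_uminus[THEN iffD2, OF assms(2)]]
  by (simp add: infsum_uminus)

definition sqn :: "('p \<Rightarrow> complex) \<Rightarrow> real" where
  "sqn f = infsum (\<lambda>x. (cmod (f x))^2) UNIV"

lemma sqn_nonneg: "0 \<le> sqn f"
  unfolding sqn_def by (rule infsum_nonneg) simp

lemma l2_iff: "f \<in> l2 \<longleftrightarrow> (\<lambda>x. (cmod (f x))^2) summable_on UNIV"
  by (simp add: l2_def)

lemma lnorm_sqn: "lnorm f = sqrt (sqn f)"
  by (simp add: lnorm_def sqn_def)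

lemma amgm2: "(a::real) * b \<le> (a^2 + b^2) / 2"
proof -
  have "0 \<le> (a - b)^2" by simp
  moreover have "(a - b)^2 = a^2 + b^2 - 2 * (a * b)" by (simp add: power2_diff)
  ultimately have "2 * (a * b) \<le> a^2 + b^2" by linarith
  then show ?thesis by simp
qed

lemma l2_prod_abs:
  assumes "f \<in> l2" "g \<in> l2"
  shows "(\<lambda>x. cmod (f x) * cmod (g x)) summable_on UNIV"
proof (rule summable_on_comparison_test)
  show "(\<lambda>x. ((cmod (f x))^2 + (cmod (g x))^2) / 2) summable_on UNIV"
  proof -
    have "(\<lambda>x. ((cmod (f x))^2 + (cmod (g x))^2) * inverse 2) summable_on UNIV"
      using assms by (intro summable_on_cmult_left summable_on_add) (auto simp: l2_iff)
    then show ?thesis by (simp only: divide_inverse)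
  qed
next
  show "\<And>x. x \<in> UNIV \<Longrightarrow> cmod (f x) * cmod (g x) \<le> ((cmod (f x))^2 + (cmod (g x))^2) / 2"
    by (rule amgm2)
qed simp

lemma l2_prod_abs_summable:
  assumes "f \<in> l2" "g \<in> l2"
  shows "(\<lambda>x. norm (f x * g x)) summable_on UNIV"
  using l2_prod_abs[OF assms] by (simp add: norm_mult)

lemma l2_prod_summable:
  assumes "f \<in> l2" "g \<in> l2"
  shows "(\<lambda>x. f x * g x) summable_on UNIV"
  using abs_summable_summable[where f="\<lambda>x. f x * g x" and A=UNIV] l2_prod_abs_summable[OF assms] by simp

lemma sqn_zero_imp:
  assumes "f \<in> l2" "sqn f = 0"
  shows "f x = 0"
proof -
  have "(cmod (f x))^2 = 0"
    by (rule nonneg_infsum_le_0D[where A=UNIV and f="\<lambda>x. (cmod (f x))^2"])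
       (use assms in \<open>auto simp: sqn_def l2_iff\<close>)
  then show ?thesis by simp
qed

lemma cs_abs:
  assumes "f \<in> l2" "g \<in> l2"
  shows "infsum (\<lambda>x. cmod (f x) * cmod (g x)) UNIV \<le> sqrt (sqn f) * sqrt (sqn g)"
proof (cases "sqn f = 0 \<or> sqn g = 0")
  case True
  then have "(\<lambda>x. cmod (f x) * cmod (g x)) = (\<lambda>x. 0)"
    using sqn_zero_imp[OF assms(1)] sqn_zero_imp[OF assms(2)] by auto
  then show ?thesis by (simp add: sqn_nonneg)
next
  case False
  define a where "a = sqn f"
  define b where "b = sqn g"
  have a: "a > 0" "b > 0" using False sqn_nonneg a_def b_def by (metis less_eq_real_def)+
  define t where "t = sqrt b / sqrt a"
  have t: "t > 0" using a by (simp add: t_def)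
  have pt: "cmod (f x) * cmod (g x) \<le> (t * (cmod (f x))^2 + (cmod (g x))^2 / t) / 2" for x
  proof -
    have "cmod (f x) * cmod (g x) = (sqrt t * cmod (f x)) * (cmod (g x) / sqrt t)"
      using t by simp
    also have "\<dots> \<le> ((sqrt t * cmod (f x))^2 + (cmod (g x) / sqrt t)^2) / 2" by (rule amgm2)
    also have "\<dots> = (t * (cmod (f x))^2 + (cmod (g x))^2 / t) / 2"
      using t by (simp add: power_mult_distrib power_divide)
    finally show ?thesis .
  qed
  have s1: "(\<lambda>x. t * (cmod (f x))^2) summable_on UNIV"
    using assms by (auto simp: l2_iff intro: summable_on_cmult_right)
  have s2: "(\<lambda>x. (cmod (g x))^2 / t) summable_on UNIV"
    using assms summable_on_cmult_left[of "\<lambda>x. (cmod (g x))^2" UNIV "inverse t"]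
    by (auto simp: l2_iff divide_inverse)
  have "infsum (\<lambda>x. cmod (f x) * cmod (g x)) UNIV
      \<le> infsum (\<lambda>x. (t * (cmod (f x))^2 + (cmod (g x))^2 / t) / 2) UNIV"
  proof (rule infsum_mono[OF l2_prod_abs[OF assms]])
    have "(\<lambda>x. (t * (cmod (f x))^2 + (cmod (g x))^2 / t) * inverse 2) summable_on UNIV"
      by (rule summable_on_cmult_left[OF summable_on_add[OF s1 s2]])
    then show "(\<lambda>x. (t * (cmod (f x))^2 + (cmod (g x))^2 / t) / 2) summable_on UNIV"
      by (simp only: divide_inverse[of _ 2])
  qed (rule pt)
  also have "\<dots> = (t * a + b / t) / 2"
  proof -
    have e1: "infsum (\<lambda>x. (t * (cmod (f x))^2 + (cmod (g x))^2 / t) / 2) UNIV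
        = infsum (\<lambda>x. t * (cmod (f x))^2 + (cmod (g x))^2 / t) UNIV * inverse 2"
      using infsum_cmult_left'[where f="\<lambda>x. t * (cmod (f x))^2 + (cmod (g x))^2 / t" and A=UNIV and c="inverse 2"]
      by (simp only: divide_inverse)
    have e2: "infsum (\<lambda>x. t * (cmod (f x))^2 + (cmod (g x))^2 / t) UNIV
        = infsum (\<lambda>x. t * (cmod (f x))^2) UNIV + infsum (\<lambda>x. (cmod (g x))^2 / t) UNIV"
      by (rule infsum_add[OF s1 s2])
    have e3: "infsum (\<lambda>x. t * (cmod (f x))^2) UNIV = t * a"
      unfolding a_def sqn_def by (rule infsum_cmult_right')
    have e4: "infsum (\<lambda>x. (cmod (g x))^2 / t) UNIV = b / t"
      using infsum_cmult_left'[where f="\<lambda>x. (cmod (g x))^2" and A=UNIV and c="inverse t"]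
      unfolding b_def sqn_def by (simp only: divide_inverse)
    show ?thesis using e1 e2 e3 e4 by (simp only: divide_inverse)
  qed
  also have "\<dots> = sqrt a * sqrt b"
  proof -
    have "t * a = sqrt b * (a / sqrt a)" by (simp add: t_def)
    also have "a / sqrt a = sqrt a" using a by (simp add: real_div_sqrt)
    finally have 1: "t * a = sqrt a * sqrt b" by simp
    have "b / t = sqrt a * (b / sqrt b)" using a by (simp add: t_def)
    also have "b / sqrt b = sqrt b" using a by (simp add: real_div_sqrt)
    finally have 2: "b / t = sqrt a * sqrt b" .
    from 1 2 have "t * a + b / t = 2 * (sqrt a * sqrt b)" by simp
    then show ?thesis by simp
  qed
  finally show ?thesis by (simp add: a_def b_def)
qed

lemma cs:
  assumes "f \<in> l2" "g \<in> l2"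
  shows "cmod (infsum (\<lambda>x. f x * g x) UNIV) \<le> sqrt (sqn f) * sqrt (sqn g)"
proof -
  have "cmod (infsum (\<lambda>x. f x * g x) UNIV) \<le> infsum (\<lambda>x. norm (f x * g x)) UNIV"
    by (rule norm_infsum_bound[OF l2_prod_abs_summable[OF assms]])
  also have "\<dots> \<le> sqrt (sqn f) * sqrt (sqn g)" using cs_abs[OF assms] by (simp add: norm_mult)
  finally show ?thesis .
qed

lemma cs_sq:
  assumes "f \<in> l2" "g \<in> l2"
  shows "(cmod (infsum (\<lambda>x. f x * g x) UNIV))^2 \<le> sqn f * sqn g"
proof -
  have "(cmod (infsum (\<lambda>x. f x * g x) UNIV))^2 \<le> (sqrt (sqn f) * sqrt (sqn g))^2"
    by (rule power_mono[OF cs[OF assms]]) simp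
  then show ?thesis by (simp add: power_mult_distrib sqn_nonneg)
qed

lemma l2_cnj: "f \<in> l2 \<Longrightarrow> (\<lambda>x. cnj (f x)) \<in> l2"
  by (simp add: l2_iff)

lemma sqn_cnj: "sqn (\<lambda>x. cnj (f x)) = sqn f"
  by (simp add: sqn_def)

lemma l2_add:
  assumes "f \<in> l2" "g \<in> l2"
  shows "(\<lambda>x. f x + g x) \<in> l2"
  unfolding l2_iff
proof (rule summable_on_comparison_test)
  show "(\<lambda>x. 2 * (cmod (f x))^2 + 2 * (cmod (g x))^2) summable_on UNIV"
    using assms by (auto simp: l2_iff intro!: summable_on_add summable_on_cmult_right)
  fix x
  have "cmod (f x + g x) \<le> cmod (f x) + cmod (g x)" by (rule norm_triangle_ineq)
  then have "(cmod (f x + g x))^2 \<le> (cmod (f x) + cmod (g x))^2" by (simp add: power_mono)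
  also have "\<dots> \<le> 2 * (cmod (f x))^2 + 2 * (cmod (g x))^2"
    using amgm2[of "cmod (f x)" "cmod (g x)"] by (simp add: power2_eq_square algebra_simps)
  finally show "(cmod (f x + g x))^2 \<le> 2 * (cmod (f x))^2 + 2 * (cmod (g x))^2" .
qed simp

lemma l2_scale: "f \<in> l2 \<Longrightarrow> (\<lambda>x. c * f x) \<in> l2"
  by (auto simp: l2_iff norm_mult power_mult_distrib intro: summable_on_cmult_right)

lemma l2_uminus: "f \<in> l2 \<Longrightarrow> (\<lambda>x. - f x) \<in> l2"
  by (simp add: l2_iff)

lemma l2_diff: "f \<in> l2 \<Longrightarrow> g \<in> l2 \<Longrightarrow> (\<lambda>x. f x - g x) \<in> l2"
  using l2_add[of f "\<lambda>x. - g x"] l2_uminus by auto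

lemma l2_zero: "(\<lambda>x. 0) \<in> l2" by (simp add: l2_iff)

lemma l2_sum:
  assumes "finite S" "\<And>s. s \<in> S \<Longrightarrow> f s \<in> l2"
  shows "(\<lambda>x. \<Sum>s\<in>S. f s x) \<in> l2"
  using assms
proof (induction S rule: finite_induct)
  case empty then show ?case by (simp add: l2_zero)
next
  case (insert s S)
  then show ?case using l2_add[of "f s" "\<lambda>x. \<Sum>s\<in>S. f s x"] by simp
qed

lemma l2_eta: "f \<in> l2 \<Longrightarrow> (\<lambda>x. f x) \<in> l2" by simp



lemma infsum_of_real_sum:
  assumes "f summable_on A"
  shows "infsum (\<lambda>x. complex_of_real (f x)) A = complex_of_real (infsum f A)"
  by (rule infsumI[OF has_sum_of_real[OF has_sum_infsum[OF assms]]])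

lemma linner_summable:
  assumes "x \<in> l2" "y \<in> l2"
  shows "(\<lambda>p. x p * cnj (y p)) summable_on UNIV"
  by (rule l2_prod_summable[OF assms(1) l2_cnj[OF assms(2)]])

lemma linner_add_left:
  assumes "x \<in> l2" "y \<in> l2" "z \<in> l2"
  shows "linner (\<lambda>p. x p + y p) z = linner x z + linner y z"
  unfolding linner_def
  using infsum_add[OF linner_summable[OF assms(1,3)] linner_summable[OF assms(2,3)]]
  by (simp add: distrib_right)

lemma linner_scale_left: "linner (\<lambda>p. c * x p) z = c * linner x z"
  unfolding linner_def by (simp add: mult.assoc infsum_cmult_right')

lemma linner_cnj: "linner y x = cnj (linner x y)"
  unfolding linner_def by (simp only: infsum_cnj[symmetric]) (simp add: mult.commute)

lemma linner_scale_right: "linner x (\<lambda>p. c * y p) = cnj c * linner x y"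
proof -
  have "linner x (\<lambda>p. c * y p) = infsum (\<lambda>p. cnj c * (x p * cnj (y p))) UNIV"
    unfolding linner_def by (rule infsum_cong) simp
  then show ?thesis by (simp add: infsum_cmult_right' linner_def)
qed

lemma linner_add_right:
  assumes "x \<in> l2" "y \<in> l2" "z \<in> l2"
  shows "linner z (\<lambda>p. x p + y p) = linner z x + linner z y"
proof -
  have "linner z (\<lambda>p. x p + y p) = cnj (linner (\<lambda>p. x p + y p) z)" by (rule linner_cnj)
  also have "\<dots> = cnj (linner x z) + cnj (linner y z)" by (simp add: linner_add_left[OF assms])
  finally show ?thesis by (simp add: linner_cnj[of z x] linner_cnj[of z y])
qed

lemma linner_sum_left:
  assumes "finite S" "\<And>s. s \<in> S \<Longrightarrow> f s \<in> l2" "z \<in> l2"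
  shows "linner (\<lambda>p. \<Sum>s\<in>S. f s p) z = (\<Sum>s\<in>S. linner (f s) z)"
proof -
  have "linner (\<lambda>p. \<Sum>s\<in>S. f s p) z = infsum (\<lambda>p. \<Sum>s\<in>S. f s p * cnj (z p)) UNIV"
    unfolding linner_def by (simp add: sum_distrib_right)
  also have "\<dots> = (\<Sum>s\<in>S. infsum (\<lambda>p. f s p * cnj (z p)) UNIV)"
    by (rule infsum_sum_fin) (use assms linner_summable in auto)
  finally show ?thesis by (simp add: linner_def)
qed

lemma linner_sum_right:
  assumes "finite S" "\<And>s. s \<in> S \<Longrightarrow> f s \<in> l2" "z \<in> l2"
  shows "linner z (\<lambda>p. \<Sum>s\<in>S. f s p) = (\<Sum>s\<in>S. linner z (f s))"
proof -
  have "linner z (\<lambda>p. \<Sum>s\<in>S. f s p) = cnj (linner (\<lambda>p. \<Sum>s\<in>S. f s p) z)" by (rule linner_cnj)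
  also have "\<dots> = (\<Sum>s\<in>S. cnj (linner (f s) z))" by (simp add: linner_sum_left[OF assms])
  also have "\<dots> = (\<Sum>s\<in>S. linner z (f s))" by (simp add: linner_cnj[of z])
  finally show ?thesis .
qed

lemma linner_uminus_left: "linner (\<lambda>p. - y p) z = - linner y z"
  unfolding linner_def by (simp add: infsum_uminus)

lemma linner_diff_left:
  assumes "x \<in> l2" "y \<in> l2" "z \<in> l2"
  shows "linner (\<lambda>p. x p - y p) z = linner x z - linner y z"
proof -
  have "linner (\<lambda>p. x p + - y p) z = linner x z + linner (\<lambda>p. - y p) z"
    by (rule linner_add_left) (use assms l2_uminus in auto)
  then show ?thesis by (simp add: linner_uminus_left)
qed

lemma linner_diff_right:
  assumes "x \<in> l2" "y \<in> l2" "z \<in> l2"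
  shows "linner z (\<lambda>p. x p - y p) = linner z x - linner z y"
proof -
  have "linner z (\<lambda>p. x p - y p) = cnj (linner (\<lambda>p. x p - y p) z)" by (rule linner_cnj)
  also have "\<dots> = cnj (linner x z) - cnj (linner y z)" by (simp add: linner_diff_left[OF assms])
  finally show ?thesis by (simp add: linner_cnj[of z x] linner_cnj[of z y])
qed

lemma linner_self: "x \<in> l2 \<Longrightarrow> linner x x = complex_of_real (sqn x)"
proof -
  assume x: "x \<in> l2"
  have "(\<lambda>p. x p * cnj (x p)) = (\<lambda>p. complex_of_real ((cmod (x p))^2))"
    by (rule ext) (rule complex_norm_square[symmetric])
  then show ?thesis unfolding linner_def sqn_def
    using infsum_of_real_sum[of "\<lambda>p. (cmod (x p))^2" UNIV] x by (simp only: l2_iff)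
qed

lemma linner_cs: "x \<in> l2 \<Longrightarrow> y \<in> l2 \<Longrightarrow> cmod (linner x y) \<le> sqrt (sqn x) * sqrt (sqn y)"
  unfolding linner_def using cs[of x "\<lambda>p. cnj (y p)"] by (simp add: l2_cnj sqn_cnj)

lemma sqn_scale: "sqn (\<lambda>p. c * x p) = (cmod c)^2 * sqn x"
  unfolding sqn_def by (simp add: norm_mult power_mult_distrib infsum_cmult_right')

lemma prod_nonneg_summable:
  fixes f :: "'a \<Rightarrow> real" and g :: "'b \<Rightarrow> real"
  assumes "f summable_on UNIV" "g summable_on UNIV" "\<And>x. f x \<ge> 0" "\<And>y. g y \<ge> 0"
  shows "(\<lambda>(x,y). f x * g y) summable_on UNIV"
    and "infsum (\<lambda>(x,y). f x * g y) UNIV = infsum f UNIV * infsum g UNIV"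
proof -
  have hs: "((\<lambda>y. f x * g y) has_sum (f x * infsum g UNIV)) UNIV" for x
    by (rule has_sum_cmult_right[OF has_sum_infsum[OF assms(2)]])
  have "(\<lambda>p. f (fst p) * g (snd p)) summable_on Sigma UNIV (\<lambda>_. UNIV)"
    by (rule summable_on_SigmaI[where g="\<lambda>x. f x * infsum g UNIV"])
       (use hs assms in \<open>auto intro: summable_on_cmult_left\<close>)
  then show s: "(\<lambda>(x,y). f x * g y) summable_on UNIV"
    by (simp add: case_prod_unfold)
  have "infsum (\<lambda>(x,y). f x * g y) UNIV = infsum (\<lambda>x. infsum (\<lambda>y. f x * g y) UNIV) UNIV"
    using infsum_Sigma'_banach[of "\<lambda>x y. f x * g y" UNIV "\<lambda>_. UNIV"] s by simp
  also have "\<dots> = infsum (\<lambda>x. f x * infsum g UNIV) UNIV"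
    by (simp add: infsum_cmult_right')
  also have "\<dots> = infsum f UNIV * infsum g UNIV"
    by (simp add: infsum_cmult_left')
  finally show "infsum (\<lambda>(x,y). f x * g y) UNIV = infsum f UNIV * infsum g UNIV" .
qed

lemma prod_complex:
  fixes f :: "'a \<Rightarrow> complex" and g :: "'b \<Rightarrow> complex"
  assumes "(\<lambda>x. cmod (f x)) summable_on UNIV" "(\<lambda>y. cmod (g y)) summable_on UNIV"
  shows "(\<lambda>(x,y). cmod (f x * g y)) summable_on UNIV"
    and "(\<lambda>(x,y). f x * g y) summable_on UNIV"
    and "infsum (\<lambda>(x,y). f x * g y) UNIV = infsum f UNIV * infsum g UNIV"
proof -
  show a: "(\<lambda>(x,y). cmod (f x * g y)) summable_on UNIV"
    using prod_nonneg_summable(1)[OF assms] by (simp add: norm_mult)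
  show s: "(\<lambda>(x,y). f x * g y) summable_on UNIV"
  proof (rule abs_summable_summable)
    show "(\<lambda>z. norm (case z of (x,y) \<Rightarrow> f x * g y)) summable_on UNIV"
      using a by (simp add: case_prod_unfold)
  qed
  have "infsum (\<lambda>(x,y). f x * g y) UNIV = infsum (\<lambda>x. infsum (\<lambda>y. f x * g y) UNIV) UNIV"
    using infsum_Sigma'_banach[of "\<lambda>x y. f x * g y" UNIV "\<lambda>_. UNIV"] s by simp
  also have "\<dots> = infsum (\<lambda>x. f x * infsum g UNIV) UNIV"
    by (simp add: infsum_cmult_right')
  also have "\<dots> = infsum f UNIV * infsum g UNIV"
    by (simp add: infsum_cmult_left')
  finally show "infsum (\<lambda>(x,y). f x * g y) UNIV = infsum f UNIV * infsum g UNIV" .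
qed

lemma fubini_pair:
  fixes h :: "'a \<Rightarrow> 'b \<Rightarrow> 'c::{banach,uniform_topological_group_add}"
  assumes "(\<lambda>(x,y). h x y) summable_on UNIV"
  shows "infsum (\<lambda>(x,y). h x y) UNIV = infsum (\<lambda>x. infsum (h x) UNIV) UNIV"
    and "infsum (\<lambda>(x,y). h x y) UNIV = infsum (\<lambda>y. infsum (\<lambda>x. h x y) UNIV) UNIV"
    and "(\<lambda>x. infsum (h x) UNIV) summable_on UNIV"
    and "h x summable_on UNIV"
    and "(\<lambda>x. h x y) summable_on UNIV"
proof -
  have s: "(\<lambda>(x,y). h x y) summable_on Sigma UNIV (\<lambda>_. UNIV)" using assms by simp
  show 1: "infsum (\<lambda>(x,y). h x y) UNIV = infsum (\<lambda>x. infsum (h x) UNIV) UNIV"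
    using infsum_Sigma'_banach[OF s] by simp
  show "infsum (\<lambda>(x,y). h x y) UNIV = infsum (\<lambda>y. infsum (\<lambda>x. h x y) UNIV) UNIV"
    using 1 infsum_swap_banach[of h UNIV UNIV] assms by simp
  show "(\<lambda>x. infsum (h x) UNIV) summable_on UNIV"
    using summable_on_Sigma_banach[OF s] by simp
  show "h x summable_on UNIV"
    using summable_on_SigmaD1[OF s] by simp
  have s2: "(\<lambda>(y,x). h x y) summable_on Sigma UNIV (\<lambda>_. UNIV)"
    using assms summable_on_swap[of "\<lambda>(x,y). h x y" UNIV UNIV] by (simp add: case_prod_beta)
  show "(\<lambda>x. h x y) summable_on UNIV"
    using summable_on_SigmaD1[OF s2, of y] by simp
qed

lemma fubini_pair':
  fixes h :: "'a \<times> 'b \<Rightarrow> 'c::{banach,uniform_topological_group_add}"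
  assumes "h summable_on UNIV"
  shows "infsum h UNIV = infsum (\<lambda>x. infsum (\<lambda>y. h (x,y)) UNIV) UNIV"
    and "infsum h UNIV = infsum (\<lambda>y. infsum (\<lambda>x. h (x,y)) UNIV) UNIV"
    and "(\<lambda>x. infsum (\<lambda>y. h (x,y)) UNIV) summable_on UNIV"
    and "(\<lambda>y. infsum (\<lambda>x. h (x,y)) UNIV) summable_on UNIV"
    and "(\<lambda>y. h (x,y)) summable_on UNIV"
    and "(\<lambda>x. h (x,y)) summable_on UNIV"
proof -
  have a: "(\<lambda>(x,y). h (x,y)) summable_on UNIV" using assms by simp
  note F = fubini_pair[where h="\<lambda>x y. h (x,y)", OF a]
  show "infsum h UNIV = infsum (\<lambda>x. infsum (\<lambda>y. h (x,y)) UNIV) UNIV" using F(1) by simp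
  show "infsum h UNIV = infsum (\<lambda>y. infsum (\<lambda>x. h (x,y)) UNIV) UNIV" using F(2) by simp
  show "(\<lambda>x. infsum (\<lambda>y. h (x,y)) UNIV) summable_on UNIV" using F(3) by simp
  show "(\<lambda>y. h (x,y)) summable_on UNIV" using F(4) by simp
  show "(\<lambda>x. h (x,y)) summable_on UNIV" using F(5) by simp
  have b: "(\<lambda>(y,x). h (x,y)) summable_on UNIV"
    using assms summable_on_swap[of h UNIV UNIV] by simp
  show "(\<lambda>y. infsum (\<lambda>x. h (x,y)) UNIV) summable_on UNIV"
    using fubini_pair(3)[where h="\<lambda>y x. h (x,y)", OF b] by simp
qed



lemma sigma_abs:
  fixes h :: "'a \<times> 'b \<Rightarrow> complex"
  assumes "\<And>x. (\<lambda>y. cmod (h (x,y))) summable_on UNIV"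
      and "(\<lambda>x. infsum (\<lambda>y. cmod (h (x,y))) UNIV) summable_on UNIV"
  shows "(\<lambda>z. cmod (h z)) summable_on UNIV" and "h summable_on UNIV"
proof -
  have "(\<lambda>z. cmod (h z)) summable_on Sigma UNIV (\<lambda>_. UNIV)"
    by (rule summable_on_SigmaI[where g="\<lambda>x. infsum (\<lambda>y. cmod (h (x,y))) UNIV"])
       (use assms in auto)
  then show a: "(\<lambda>z. cmod (h z)) summable_on UNIV" by simp
  show "h summable_on UNIV" using abs_summable_summable a by blast
qed

lemma l2_tensor:
  assumes "f \<in> l2" "g \<in> l2"
  shows "(\<lambda>(x,y). f x * g y) \<in> l2"
    and "sqn (\<lambda>(x,y). f x * g y) = sqn f * sqn g"
proof -
  have e: "(\<lambda>z. (cmod (case z of (x,y) \<Rightarrow> f x * g y))^2) = (\<lambda>(x,y). (cmod (f x))^2 * (cmod (g y))^2)"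
    by (auto simp: norm_mult power_mult_distrib)
  note P = prod_nonneg_summable[of "\<lambda>x. (cmod (f x))^2" "\<lambda>y. (cmod (g y))^2"]
  show "(\<lambda>(x,y). f x * g y) \<in> l2"
    unfolding l2_iff e using P(1) assms by (simp add: l2_iff)
  show "sqn (\<lambda>(x,y). f x * g y) = sqn f * sqn g"
    unfolding sqn_def e using P(2) assms by (simp add: l2_iff)
qed

lemma l2_of_sqrt:
  fixes f :: "'a \<Rightarrow> real"
  assumes "f summable_on UNIV" "\<And>x. f x \<ge> 0"
  shows "(\<lambda>x. complex_of_real (sqrt (f x))) \<in> l2"
    and "sqn (\<lambda>x. complex_of_real (sqrt (f x))) = infsum f UNIV"
proof -
  have e: "(\<lambda>x. (cmod (complex_of_real (sqrt (f x))))^2) = f"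
    using assms(2) by (auto simp: abs_of_nonneg)
  show "(\<lambda>x. complex_of_real (sqrt (f x))) \<in> l2" unfolding l2_iff e by (rule assms(1))
  show "sqn (\<lambda>x. complex_of_real (sqrt (f x))) = infsum f UNIV" unfolding sqn_def e ..
qed

section \<open>Kernels\<close>

definition hsN :: "('p \<Rightarrow> 'q \<Rightarrow> complex) \<Rightarrow> real" where
  "hsN X = infsum (\<lambda>(p,q). (cmod (X p q))^2) UNIV"

lemma hs_norm_hsN: "hs_norm X = sqrt (hsN X)"
  by (simp add: hs_norm_def hsN_def)

lemma hsN_nonneg: "hsN X \<ge> 0"
  unfolding hsN_def by (rule infsum_nonneg) auto

lemma hs_l2: "hs X \<longleftrightarrow> (\<lambda>(p,q). X p q) \<in> l2"
  by (simp add: hs_def l2_iff case_prod_unfold)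

lemma hsN_sqn: "hsN X = sqn (\<lambda>(p,q). X p q)"
  by (simp add: hsN_def sqn_def case_prod_unfold)

lemma hs_fub:
  assumes "hs X"
  shows "X p \<in> l2" "(\<lambda>p. X p q) \<in> l2"
    "(\<lambda>p. sqn (X p)) summable_on UNIV" "infsum (\<lambda>p. sqn (X p)) UNIV = hsN X"
    "(\<lambda>q. sqn (\<lambda>p. X p q)) summable_on UNIV" "infsum (\<lambda>q. sqn (\<lambda>p. X p q)) UNIV = hsN X"
proof -
  have s: "(\<lambda>(p,q). (cmod (X p q))^2) summable_on UNIV" using assms by (simp add: hs_def)
  note F = fubini_pair[where h="\<lambda>p q. (cmod (X p q))^2", OF s]
  show "X p \<in> l2" using F(4)[of p] by (simp add: l2_iff)
  show "(\<lambda>p. X p q) \<in> l2" using F(5)[of q] by (simp add: l2_iff)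
  show "(\<lambda>p. sqn (X p)) summable_on UNIV" using F(3) by (simp add: sqn_def)
  show "infsum (\<lambda>p. sqn (X p)) UNIV = hsN X" using F(1) by (simp add: sqn_def hsN_def)
  have s2: "(\<lambda>(q,p). (cmod (X p q))^2) summable_on UNIV"
    using s summable_on_swap[of "\<lambda>(p,q). (cmod (X p q))^2" UNIV UNIV] by simp
  note G = fubini_pair[where h="\<lambda>q p. (cmod (X p q))^2", OF s2]
  show "(\<lambda>q. sqn (\<lambda>p. X p q)) summable_on UNIV" using G(3) by (simp add: sqn_def)
  show "infsum (\<lambda>q. sqn (\<lambda>p. X p q)) UNIV = hsN X" using G(2) F(2) by (simp add: sqn_def hsN_def)
qed

lemma hs_kadj: "hs X \<Longrightarrow> hs (kadj X)"
  unfolding hs_def kadj_def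
  using summable_on_swap[of "\<lambda>(p,q). (cmod (X p q))^2" UNIV UNIV] by simp

lemma hsN_kadj:
  assumes "hs X" shows "hsN (kadj X) = hsN X"
proof -
  have "hsN (kadj X) = infsum (\<lambda>q. sqn (kadj X q)) UNIV" using hs_fub(4)[OF hs_kadj[OF assms]] by simp
  also have "\<dots> = infsum (\<lambda>q. sqn (\<lambda>p. X p q)) UNIV" by (simp add: kadj_def sqn_cnj)
  also have "\<dots> = hsN X" by (rule hs_fub(6)[OF assms])
  finally show ?thesis .
qed

lemma kadj_kadj[simp]: "kadj (kadj X) = X"
  by (simp add: kadj_def)

lemma kapply_l2:
  assumes "hs X" "v \<in> l2"
  shows "kapply X v \<in> l2" and "sqn (kapply X v) \<le> hsN X * sqn v"
proof -
  have pt: "(cmod (kapply X v p))^2 \<le> sqn (X p) * sqn v" for p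
    unfolding kapply_def using cs_sq[OF hs_fub(1)[OF assms(1)] assms(2)] by simp
  have sm: "(\<lambda>p. sqn (X p) * sqn v) summable_on UNIV"
    by (rule summable_on_cmult_left[OF hs_fub(3)[OF assms(1)]])
  have s: "(\<lambda>p. (cmod (kapply X v p))^2) summable_on UNIV"
    by (rule summable_on_comparison_test[OF sm]) (use pt in auto)
  then show "kapply X v \<in> l2" by (simp add: l2_iff)
  have "sqn (kapply X v) \<le> infsum (\<lambda>p. sqn (X p) * sqn v) UNIV"
    unfolding sqn_def[of "kapply X v"] by (rule infsum_mono[OF s sm pt])
  also have "\<dots> = hsN X * sqn v"
    using hs_fub(4)[OF assms(1)] by (simp add: infsum_cmult_left')
  finally show "sqn (kapply X v) \<le> hsN X * sqn v" .
qed

lemma kapply_sum: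
  assumes "finite S" "hs X" "\<And>s. s \<in> S \<Longrightarrow> f s \<in> l2"
  shows "kapply X (\<lambda>q. \<Sum>s\<in>S. c s * f s q) = (\<lambda>p. \<Sum>s\<in>S. c s * kapply X (f s) p)"
proof
  fix p
  have "kapply X (\<lambda>q. \<Sum>s\<in>S. c s * f s q) p = infsum (\<lambda>q. \<Sum>s\<in>S. c s * (X p q * f s q)) UNIV"
    unfolding kapply_def by (simp add: sum_distrib_left mult.left_commute)
  also have "\<dots> = (\<Sum>s\<in>S. infsum (\<lambda>q. c s * (X p q * f s q)) UNIV)"
  proof (rule infsum_sum_fin[OF assms(1)])
    fix s assume "s \<in> S"
    then show "(\<lambda>q. c s * (X p q * f s q)) summable_on UNIV"
      by (intro summable_on_cmult_right l2_prod_summable hs_fub(1)[OF assms(2)] assms(3))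
  qed
  also have "\<dots> = (\<Sum>s\<in>S. c s * kapply X (f s) p)"
    by (simp add: infsum_cmult_right' kapply_def)
  finally show "kapply X (\<lambda>q. \<Sum>s\<in>S. c s * f s q) p = (\<Sum>s\<in>S. c s * kapply X (f s) p)" .
qed

lemma kapply_diff:
  assumes "hs X" "x \<in> l2" "y \<in> l2"
  shows "kapply X (\<lambda>q. x q - y q) = (\<lambda>p. kapply X x p - kapply X y p)"
proof
  fix p
  have "kapply X (\<lambda>q. x q - y q) p = infsum (\<lambda>q. X p q * x q - X p q * y q) UNIV"
    unfolding kapply_def by (simp add: right_diff_distrib)
  also have "\<dots> = kapply X x p - kapply X y p"
    unfolding kapply_def
    by (rule infsum_diff') (intro l2_prod_summable hs_fub(1)[OF assms(1)] assms(2,3))+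
  finally show "kapply X (\<lambda>q. x q - y q) p = kapply X x p - kapply X y p" .
qed

lemma kapply_comp:
  assumes "hs X" "hs Y" "v \<in> l2"
  shows "kapply (kcomp X Y) v = kapply X (kapply Y v)"
proof
  fix p
  define f where "f = (\<lambda>(r,q). X p r * v q)"
  define g where "g = (\<lambda>(r,q). Y r q)"
  have fl: "f \<in> l2" unfolding f_def by (rule l2_tensor(1)[OF hs_fub(1)[OF assms(1)] assms(3)])
  have gl: "g \<in> l2" unfolding g_def using assms(2) by (simp add: hs_l2)
  have s: "(\<lambda>z. f z * g z) summable_on UNIV" by (rule l2_prod_summable[OF fl gl])
  note F = fubini_pair'[OF s]
  have "kapply (kcomp X Y) v p = infsum (\<lambda>q. infsum (\<lambda>r. X p r * Y r q * v q) UNIV) UNIV"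
    unfolding kapply_def kcomp_def by (simp only: infsum_cmult_left')
  also have "\<dots> = infsum (\<lambda>q. infsum (\<lambda>r. f (r,q) * g (r,q)) UNIV) UNIV"
    unfolding f_def g_def by (intro infsum_cong) (simp add: ac_simps)
  also have "\<dots> = infsum (\<lambda>r. infsum (\<lambda>q. f (r,q) * g (r,q)) UNIV) UNIV"
    using F(1) F(2) by simp
  also have "\<dots> = infsum (\<lambda>r. infsum (\<lambda>q. X p r * (Y r q * v q)) UNIV) UNIV"
    unfolding f_def g_def by (intro infsum_cong) (simp add: ac_simps)
  also have "\<dots> = kapply X (kapply Y v) p"
    unfolding kapply_def by (simp only: infsum_cmult_right')
  finally show "kapply (kcomp X Y) v p = kapply X (kapply Y v) p" .
qed

lemma kapply_adj:
  assumes "hs X" "x \<in> l2" "y \<in> l2"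
  shows "linner (kapply X x) y = linner x (kapply (kadj X) y)"
proof -
  define f where "f = (\<lambda>(p,q). cnj (y p) * x q)"
  define g where "g = (\<lambda>(p,q). X p q)"
  have fl: "f \<in> l2" unfolding f_def by (rule l2_tensor(1)[OF l2_cnj[OF assms(3)] assms(2)])
  have gl: "g \<in> l2" unfolding g_def using assms(1) by (simp add: hs_l2)
  have s: "(\<lambda>z. f z * g z) summable_on UNIV" by (rule l2_prod_summable[OF fl gl])
  note F = fubini_pair'[OF s]
  have "linner (kapply X x) y = infsum (\<lambda>p. infsum (\<lambda>q. X p q * x q * cnj (y p)) UNIV) UNIV"
    unfolding linner_def kapply_def by (simp only: infsum_cmult_left')
  also have "\<dots> = infsum (\<lambda>p. infsum (\<lambda>q. f (p,q) * g (p,q)) UNIV) UNIV"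
    unfolding f_def g_def by (intro infsum_cong) (simp add: ac_simps)
  also have "\<dots> = infsum (\<lambda>q. infsum (\<lambda>p. f (p,q) * g (p,q)) UNIV) UNIV"
    using F(1) F(2) by simp
  also have "\<dots> = infsum (\<lambda>q. infsum (\<lambda>p. x q * cnj (cnj (X p q) * y p)) UNIV) UNIV"
    unfolding f_def g_def by (intro infsum_cong) (simp add: ac_simps)
  also have "\<dots> = infsum (\<lambda>q. x q * infsum (\<lambda>p. cnj (cnj (X p q) * y p)) UNIV) UNIV"
    by (simp only: infsum_cmult_right')
  also have "\<dots> = linner x (kapply (kadj X) y)"
    unfolding linner_def kapply_def kadj_def by (simp only: infsum_cnj)
  finally show ?thesis .
qed

lemma kapply_gram:
  assumes "hs A" "x \<in> l2"
  shows "linner (kapply (kcomp A (kadj A)) x) x = complex_of_real (sqn (kapply (kadj A) x))"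
proof -
  have a: "hs (kadj A)" by (rule hs_kadj[OF assms(1)])
  have z: "kapply (kadj A) x \<in> l2" by (rule kapply_l2(1)[OF a assms(2)])
  have "linner (kapply (kcomp A (kadj A)) x) x = linner (kapply A (kapply (kadj A) x)) x"
    by (simp add: kapply_comp[OF assms(1) a assms(2)])
  also have "\<dots> = linner (kapply (kadj A) x) (kapply (kadj A) x)"
    by (rule kapply_adj[OF assms(1) z assms(2)])
  also have "\<dots> = complex_of_real (sqn (kapply (kadj A) x))" by (rule linner_self[OF z])
  finally show ?thesis .
qed



section \<open>Finite spans and Gram-Schmidt\<close>

definition fspan :: "('p \<Rightarrow> complex) set \<Rightarrow> ('p \<Rightarrow> complex) set" where
  "fspan S = {f. \<exists>\<alpha>. f = (\<lambda>x. \<Sum>s\<in>S. \<alpha> s * s x)}"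

definition orthonormal :: "('p \<Rightarrow> complex) set \<Rightarrow> bool" where
  "orthonormal Q \<longleftrightarrow> Q \<subseteq> l2 \<and> (\<forall>f\<in>Q. \<forall>g\<in>Q. linner f g = (if f = g then 1 else 0))"

lemma fspanI: "y = (\<lambda>x. \<Sum>s\<in>S. \<alpha> s * s x) \<Longrightarrow> y \<in> fspan S"
  unfolding fspan_def by blast

lemma fspan_mono:
  assumes "finite T" "S \<subseteq> T"
  shows "fspan S \<subseteq> fspan T"
proof
  fix y assume "y \<in> fspan S"
  then obtain \<alpha> where y: "y = (\<lambda>x. \<Sum>s\<in>S. \<alpha> s * s x)" by (auto simp: fspan_def)
  define \<beta> where "\<beta> s = (if s \<in> S then \<alpha> s else 0)" for s
  have "(\<lambda>x. \<Sum>s\<in>T. \<beta> s * s x) = (\<lambda>x. \<Sum>s\<in>S. \<alpha> s * s x)"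
  proof
    fix x
    have "(\<Sum>s\<in>T. \<beta> s * s x) = (\<Sum>s\<in>S. \<beta> s * s x)"
      by (rule sum.mono_neutral_right) (use assms in \<open>auto simp: \<beta>_def\<close>)
    also have "\<dots> = (\<Sum>s\<in>S. \<alpha> s * s x)" by (simp add: \<beta>_def)
    finally show "(\<Sum>s\<in>T. \<beta> s * s x) = (\<Sum>s\<in>S. \<alpha> s * s x)" .
  qed
  then show "y \<in> fspan T" unfolding y by (intro fspanI[where \<alpha>=\<beta>]) simp
qed

lemma fspan_elem:
  assumes "finite S" "s \<in> S"
  shows "s \<in> fspan S"
proof -
  have "(\<lambda>x. \<Sum>t\<in>S. (if t = s then 1 else 0) * t x) = s"
  proof
    fix x
    have "(\<Sum>t\<in>S. (if t = s then 1 else 0) * t x) = (\<Sum>t\<in>S. if t = s then s x else 0)"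
      by (rule sum.cong) auto
    then show "(\<Sum>t\<in>S. (if t = s then 1 else 0) * t x) = s x"
      using assms by simp
  qed
  then show ?thesis by (intro fspanI[where \<alpha>="\<lambda>t. if t = s then 1 else 0"]) simp
qed

lemma fspan_l2:
  assumes "finite S" "S \<subseteq> l2" "y \<in> fspan S"
  shows "y \<in> l2"
proof -
  obtain \<alpha> where y: "y = (\<lambda>x. \<Sum>s\<in>S. \<alpha> s * s x)" using assms(3) by (auto simp: fspan_def)
  show ?thesis unfolding y by (rule l2_sum[OF assms(1)]) (use assms(2) l2_scale in auto)
qed

lemma on_coeff:
  assumes "finite Q" "orthonormal Q" "g \<in> Q"
  shows "linner (\<lambda>x. \<Sum>f\<in>Q. \<alpha> f * f x) g = \<alpha> g"
proof -
  have l: "Q \<subseteq> l2" using assms(2) by (simp add: orthonormal_def)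
  have "linner (\<lambda>x. \<Sum>f\<in>Q. \<alpha> f * f x) g = (\<Sum>f\<in>Q. linner (\<lambda>x. \<alpha> f * f x) g)"
    by (rule linner_sum_left[OF assms(1)]) (use l assms(3) l2_scale in auto)
  also have "\<dots> = (\<Sum>f\<in>Q. \<alpha> f * (if f = g then 1 else 0))"
    using assms(2,3) by (intro sum.cong) (auto simp: linner_scale_left orthonormal_def)
  also have "\<dots> = \<alpha> g" using assms(1,3) by (simp add: if_distrib sum.delta cong: if_cong)
  finally show ?thesis .
qed

lemma on_sqn:
  assumes "finite Q" "orthonormal Q"
  shows "sqn (\<lambda>x. \<Sum>f\<in>Q. \<alpha> f * f x) = (\<Sum>f\<in>Q. (cmod (\<alpha> f))^2)"
proof -
  define y where "y = (\<lambda>x. \<Sum>f\<in>Q. \<alpha> f * f x)"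
  have l: "Q \<subseteq> l2" using assms(2) by (simp add: orthonormal_def)
  have yl: "y \<in> l2" unfolding y_def by (rule l2_sum[OF assms(1)]) (use l l2_scale in auto)
  have "complex_of_real (sqn y) = linner y y" by (rule linner_self[OF yl, symmetric])
  also have "\<dots> = (\<Sum>f\<in>Q. linner (\<lambda>x. \<alpha> f * f x) y)"
  proof -
    have pre: "\<And>f. f \<in> Q \<Longrightarrow> (\<lambda>x. \<alpha> f * f x) \<in> l2" using l l2_scale by auto
    show ?thesis using linner_sum_left[where f="\<lambda>f x. \<alpha> f * f x" and z=y, OF assms(1) pre yl] unfolding y_def[symmetric] .
  qed
  also have "\<dots> = (\<Sum>f\<in>Q. \<alpha> f * cnj (\<alpha> f))"
  proof (rule sum.cong)
    fix f assume f: "f \<in> Q"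
    have "linner (\<lambda>x. \<alpha> f * f x) y = \<alpha> f * cnj (linner y f)"
      by (simp add: linner_scale_left linner_cnj[of f y])
    also have "linner y f = \<alpha> f" unfolding y_def by (rule on_coeff[OF assms f])
    finally show "linner (\<lambda>x. \<alpha> f * f x) y = \<alpha> f * cnj (\<alpha> f)" .
  qed simp
  also have "\<dots> = complex_of_real (\<Sum>f\<in>Q. (cmod (\<alpha> f))^2)"
  proof -
    have "\<And>f. \<alpha> f * cnj (\<alpha> f) = complex_of_real ((cmod (\<alpha> f))^2)"
      by (rule complex_norm_square[symmetric])
    then show ?thesis by (simp only: of_real_sum)
  qed
  finally show ?thesis unfolding y_def by (simp only: of_real_eq_iff)
qed

lemma gram_schmidt:
  assumes "finite G" "G \<subseteq> l2"
  shows "\<exists>Q. finite Q \<and> orthonormal Q \<and> card Q \<le> card G \<and> G \<subseteq> fspan Q"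
  using assms
proof (induction G rule: finite_induct)
  case empty
  show ?case by (rule exI[of _ "{}"]) (simp add: orthonormal_def)
next
  case (insert g G)
  then obtain Q where Q: "finite Q" "orthonormal Q" "card Q \<le> card G" "G \<subseteq> fspan Q" by auto
  have l: "Q \<subseteq> l2" using Q(2) by (simp add: orthonormal_def)
  have gl: "g \<in> l2" using insert by auto
  define p where "p = (\<lambda>x. \<Sum>f\<in>Q. linner g f * f x)"
  define r where "r = (\<lambda>x. g x - p x)"
  have pl: "p \<in> l2" unfolding p_def by (rule l2_sum[OF Q(1)]) (use l l2_scale in auto)
  have rl: "r \<in> l2" unfolding r_def by (rule l2_diff[OF gl pl])
  have rf: "linner r f = 0" if f: "f \<in> Q" for f
  proof -
    have "linner r f = linner g f - linner p f" unfolding r_def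
      by (rule linner_diff_left[OF gl pl]) (use f l in auto)
    also have "linner p f = linner g f" unfolding p_def by (rule on_coeff[OF Q(1,2) f])
    finally show ?thesis by simp
  qed
  show ?case
  proof (cases "r = (\<lambda>_. 0)")
    case True
    have "g = p"
    proof
      fix x
      have "r x = 0" using True by simp
      then show "g x = p x" unfolding r_def by simp
    qed
    then have "g \<in> fspan Q" unfolding p_def by (rule fspanI)
    then show ?thesis using Q insert by (intro exI[of _ Q]) auto
  next
    case False
    have sr: "sqn r > 0"
    proof -
      have "sqn r \<noteq> 0" using False sqn_zero_imp[OF rl] by blast
      then show ?thesis using sqn_nonneg[of r] by linarith
    qed
    define n where "n = sqrt (sqn r)"
    have n: "n > 0" using sr by (simp add: n_def)
    define q where "q = (\<lambda>x. complex_of_real (inverse n) * r x)"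
    have ql: "q \<in> l2" unfolding q_def by (rule l2_scale[OF rl])
    have qq: "linner q q = 1"
    proof -
      have "linner q q = complex_of_real (inverse n) * cnj (complex_of_real (inverse n)) * linner r r"
        unfolding q_def by (simp add: linner_scale_left linner_scale_right)
      also have "\<dots> = complex_of_real (inverse n * inverse n * sqn r)"
        by (simp add: linner_self[OF rl])
      also have "inverse n * inverse n * sqn r = 1"
        using n sr unfolding n_def by (simp add: field_simps)
      finally show ?thesis by simp
    qed
    have qf: "linner q f = 0" if "f \<in> Q" for f
      unfolding q_def by (simp add: linner_scale_left rf[OF that])
    have fq: "linner f q = 0" if "f \<in> Q" for f
      using qf[OF that] linner_cnj[of f q] by simp
    have qO: "q \<notin> Q" using qf qq by force
    define Q' where "Q' = insert q Q"
    have fin: "finite Q'" using Q(1) by (simp add: Q'_def)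
    have on: "orthonormal Q'"
      unfolding orthonormal_def Q'_def
      using Q(2) ql qq qf fq l by (auto simp: orthonormal_def)
    have card: "card Q' \<le> card (insert g G)"
      using Q(1,3) qO insert(1,2) by (simp add: Q'_def)
    have "g \<in> fspan Q'"
    proof -
      define \<alpha> where "\<alpha> f = (if f = q then complex_of_real n else linner g f)" for f
      have "(\<lambda>x. \<Sum>f\<in>Q'. \<alpha> f * f x) = g"
      proof
        fix x
        have "(\<Sum>f\<in>Q'. \<alpha> f * f x) = \<alpha> q * q x + (\<Sum>f\<in>Q. \<alpha> f * f x)"
          unfolding Q'_def using Q(1) qO by simp
        also have "(\<Sum>f\<in>Q. \<alpha> f * f x) = p x"
          unfolding p_def \<alpha>_def using qO by (intro sum.cong) auto
        also have "\<alpha> q * q x = r x"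
        proof -
          have "n * inverse n = 1" using n by simp
          then have "complex_of_real n * complex_of_real (inverse n) = 1"
            by (metis of_real_mult of_real_1)
          then show ?thesis unfolding \<alpha>_def q_def by (simp add: mult.assoc[symmetric])
        qed
        finally show "(\<Sum>f\<in>Q'. \<alpha> f * f x) = g x" unfolding r_def by simp
      qed
      then show ?thesis by (intro fspanI[where \<alpha>=\<alpha>]) simp
    qed
    moreover have "G \<subseteq> fspan Q'"
      using Q(4) fspan_mono[OF fin, of Q] by (auto simp: Q'_def)
    ultimately show ?thesis using fin on card by (intro exI[of _ Q']) auto
  qed
qed

lemma fspan_trans:
  assumes "finite T" "finite S" "S \<subseteq> fspan T"
  shows "fspan S \<subseteq> fspan T"
proof
  fix y assume "y \<in> fspan S"
  then obtain \<alpha> where y: "y = (\<lambda>x. \<Sum>s\<in>S. \<alpha> s * s x)" by (auto simp: fspan_def)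
  have "\<forall>s\<in>S. \<exists>\<beta>. s = (\<lambda>x. \<Sum>t\<in>T. \<beta> t * t x)" using assms(3) by (auto simp: fspan_def)
  then obtain \<beta> where \<beta>: "\<And>s. s \<in> S \<Longrightarrow> s = (\<lambda>x. \<Sum>t\<in>T. \<beta> s t * t x)" by metis
  have "y = (\<lambda>x. \<Sum>t\<in>T. (\<Sum>s\<in>S. \<alpha> s * \<beta> s t) * t x)"
  proof
    fix x
    have "y x = (\<Sum>s\<in>S. \<alpha> s * (\<Sum>t\<in>T. \<beta> s t * t x))"
      unfolding y by (intro sum.cong refl) (subst \<beta>, auto)
    also have "\<dots> = (\<Sum>t\<in>T. (\<Sum>s\<in>S. \<alpha> s * \<beta> s t) * t x)"
      by (simp add: sum_distrib_left sum_distrib_right mult.assoc sum.swap[of _ S T])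
    finally show "y x = (\<Sum>t\<in>T. (\<Sum>s\<in>S. \<alpha> s * \<beta> s t) * t x)" .
  qed
  then show "y \<in> fspan T" by (rule fspanI)
qed

section \<open>Trace bound\<close>

lemma trace_bound:
  fixes W :: "'c \<Rightarrow> 'c \<Rightarrow> complex"
  assumes "hs W" "finite G" "G \<subseteq> l2" "card G \<le> m" "\<And>c. W c \<in> fspan G"
  shows "(\<lambda>c. W c c) summable_on UNIV"
    and "(cmod (infsum (\<lambda>c. W c c) UNIV))^2 \<le> real m * hsN W"
proof -
  obtain Q where Q: "finite Q" "orthonormal Q" "card Q \<le> card G" "G \<subseteq> fspan Q"
    using gram_schmidt[OF assms(2,3)] by blast
  have l: "Q \<subseteq> l2" using Q(2) by (simp add: orthonormal_def)
  have Wsp: "W c \<in> fspan Q" for c using fspan_trans[OF Q(1) assms(2) Q(4)] assms(5) by blast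
  define \<alpha> where "\<alpha> f c = linner (W c) f" for f c
  have Wexp: "W c = (\<lambda>x. \<Sum>f\<in>Q. \<alpha> f c * f x)" for c
  proof -
    obtain \<beta> where b: "W c = (\<lambda>x. \<Sum>f\<in>Q. \<beta> f * f x)" using Wsp[of c] by (auto simp: fspan_def)
    have "\<beta> f = \<alpha> f c" if "f \<in> Q" for f
      unfolding \<alpha>_def b using on_coeff[OF Q(1,2) that, of \<beta>] by simp
    then show ?thesis unfolding b by (intro ext sum.cong) auto
  qed
  have sqW: "sqn (W c) = (\<Sum>f\<in>Q. (cmod (\<alpha> f c))^2)" for c
    by (subst Wexp) (rule on_sqn[OF Q(1,2)])
  have rows: "(\<lambda>c. sqn (W c)) summable_on UNIV" "infsum (\<lambda>c. sqn (W c)) UNIV = hsN W"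
    using hs_fub(3,4)[OF assms(1)] by auto
  have al: "\<alpha> f \<in> l2" if "f \<in> Q" for f
    unfolding l2_iff
  proof (rule summable_on_comparison_test[OF rows(1)])
    fix c
    show "(cmod (\<alpha> f c))^2 \<le> sqn (W c)" unfolding sqW
      by (rule member_le_sum[OF that]) (auto simp: Q(1))
  qed simp
  have fn: "sqn f = 1" if "f \<in> Q" for f
    using linner_self[of f] that l Q(2) by (auto simp: orthonormal_def)
  have diag: "W c c = (\<Sum>f\<in>Q. \<alpha> f c * f c)" for c by (subst Wexp) simp
  have ps: "(\<lambda>c. \<alpha> f c * f c) summable_on UNIV" if "f \<in> Q" for f
    by (rule l2_prod_summable[OF al[OF that]]) (use that l in auto)
  show "(\<lambda>c. W c c) summable_on UNIV"
    unfolding diag by (rule summable_on_sum_fin[OF Q(1) ps])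
  have tr: "infsum (\<lambda>c. W c c) UNIV = (\<Sum>f\<in>Q. infsum (\<lambda>c. \<alpha> f c * f c) UNIV)"
    unfolding diag by (rule infsum_sum_fin[OF Q(1) ps])
  have "cmod (infsum (\<lambda>c. W c c) UNIV) \<le> (\<Sum>f\<in>Q. cmod (infsum (\<lambda>c. \<alpha> f c * f c) UNIV))"
    unfolding tr by (rule norm_sum)
  also have "\<dots> \<le> (\<Sum>f\<in>Q. sqrt (sqn (\<alpha> f)))"
  proof (rule sum_mono)
    fix f assume f: "f \<in> Q"
    show "cmod (infsum (\<lambda>c. \<alpha> f c * f c) UNIV) \<le> sqrt (sqn (\<alpha> f))"
      using cs[OF al[OF f], of f] f l fn[OF f] by auto
  qed
  finally have le1: "cmod (infsum (\<lambda>c. W c c) UNIV) \<le> (\<Sum>f\<in>Q. sqrt (sqn (\<alpha> f)))" .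
  have "(cmod (infsum (\<lambda>c. W c c) UNIV))^2 \<le> (\<Sum>f\<in>Q. sqrt (sqn (\<alpha> f)))^2"
    by (rule power_mono[OF le1]) simp
  also have "\<dots> \<le> (\<Sum>f\<in>Q. (sqrt (sqn (\<alpha> f)))^2) * card Q"
    by (rule sum_squared_le_sum_of_squares)
  also have "(\<Sum>f\<in>Q. (sqrt (sqn (\<alpha> f)))^2) = (\<Sum>f\<in>Q. sqn (\<alpha> f))"
    by (simp add: sqn_nonneg)
  also have "(\<Sum>f\<in>Q. sqn (\<alpha> f)) = hsN W"
  proof -
    have "(\<Sum>f\<in>Q. sqn (\<alpha> f)) = infsum (\<lambda>c. \<Sum>f\<in>Q. (cmod (\<alpha> f c))^2) UNIV"
      unfolding sqn_def
      by (rule infsum_sum_fin[symmetric, OF Q(1)]) (use al in \<open>auto simp: l2_iff\<close>)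
    also have "\<dots> = infsum (\<lambda>c. sqn (W c)) UNIV" by (simp add: sqW)
    finally show ?thesis using rows(2) by simp
  qed
  also have "hsN W * real (card Q) \<le> real m * hsN W"
  proof -
    have h: "real (card Q) \<le> real m" using Q(3) assms(4) by simp
    have "real (card Q) * hsN W \<le> real m * hsN W" by (rule mult_right_mono[OF h hsN_nonneg])
    then show ?thesis by (metis mult.commute)
  qed
  finally show "(cmod (infsum (\<lambda>c. W c c) UNIV))^2 \<le> real m * hsN W" .
qed



lemma onb_l2: "onb e \<Longrightarrow> e i \<in> l2" by (simp add: onb_def)
lemma onb_on: "onb e \<Longrightarrow> linner (e i) (e j) = (if i = j then 1 else 0)" by (simp add: onb_def)

lemma w_slice:
  assumes "w \<in> l2"
  shows "(\<lambda>k. w (k,h)) \<in> l2" "(\<lambda>h. sqn (\<lambda>k. w (k,h))) summable_on UNIV"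
    "infsum (\<lambda>h. sqn (\<lambda>k. w (k,h))) UNIV = sqn w"
proof -
  have s: "(\<lambda>z. (cmod (w z))^2) summable_on UNIV" using assms by (simp add: l2_iff)
  note F = fubini_pair'[OF s]
  show "(\<lambda>k. w (k,h)) \<in> l2" using F(6)[of h] by (simp add: l2_iff)
  show "(\<lambda>h. sqn (\<lambda>k. w (k,h))) summable_on UNIV" using F(4) by (simp add: sqn_def)
  show "infsum (\<lambda>h. sqn (\<lambda>k. w (k,h))) UNIV = sqn w" using F(2) by (simp add: sqn_def)
qed

lemma coeff_lin: "coeff_vec e w j h = linner (\<lambda>k. w (k,h)) (e j)"
  by (simp add: coeff_vec_def linner_def mult.commute)

definition Ef :: "('i \<Rightarrow> 'k \<Rightarrow> complex) \<Rightarrow> 'i set \<Rightarrow> ('i \<Rightarrow> complex) \<Rightarrow> 'k \<Rightarrow> complex" where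
  "Ef e F c = (\<lambda>k. \<Sum>j\<in>F. cnj (c j) * e j k)"

lemma Ef_l2: "onb e \<Longrightarrow> finite F \<Longrightarrow> Ef e F c \<in> l2"
  unfolding Ef_def by (rule l2_sum) (auto intro: l2_scale onb_l2)

lemma Ef_sqn:
  assumes "onb e" "finite F"
  shows "sqn (Ef e F c) = (\<Sum>j\<in>F. (cmod (c j))^2)"
proof -
  have El: "Ef e F c \<in> l2" by (rule Ef_l2[OF assms])
  have ei: "linner (e i) (Ef e F c) = (if i \<in> F then c i else 0)" for i
  proof -
    have "linner (e i) (Ef e F c) = (\<Sum>j\<in>F. linner (e i) (\<lambda>k. cnj (c j) * e j k))"
      unfolding Ef_def by (rule linner_sum_right[OF assms(2)]) (auto intro: l2_scale onb_l2[OF assms(1)])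
    also have "\<dots> = (\<Sum>j\<in>F. if i = j then c j else 0)"
      by (intro sum.cong) (auto simp: linner_scale_right onb_on[OF assms(1)])
    finally show ?thesis using assms(2) by simp
  qed
  have "linner (Ef e F c) (Ef e F c) = (\<Sum>i\<in>F. linner (\<lambda>k. cnj (c i) * e i k) (Ef e F c))"
    unfolding Ef_def[of e F c] by (rule linner_sum_left[OF assms(2)])
      (auto intro: l2_scale onb_l2[OF assms(1)] El[unfolded Ef_def])
  also have "\<dots> = (\<Sum>i\<in>F. cnj (c i) * c i)"
    by (intro sum.cong) (auto simp: linner_scale_left ei)
  also have "\<dots> = complex_of_real (\<Sum>i\<in>F. (cmod (c i))^2)"
  proof -
    have "\<And>i. cnj (c i) * c i = complex_of_real ((cmod (c i))^2)"
      by (simp only: mult.commute[of "cnj _"]) (rule complex_norm_square[symmetric])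
    then show ?thesis by (simp only: of_real_sum)
  qed
  finally have "linner (Ef e F c) (Ef e F c) = complex_of_real (\<Sum>i\<in>F. (cmod (c i))^2)" .
  then show ?thesis using linner_self[OF El] of_real_eq_iff by metis
qed

lemma Uc_linner:
  assumes "onb e" "w \<in> l2" "finite F"
  shows "(\<Sum>j\<in>F. c j * coeff_vec e w j h) = linner (\<lambda>k. w (k,h)) (Ef e F c)"
proof -
  have "linner (\<lambda>k. w (k,h)) (Ef e F c) = (\<Sum>j\<in>F. linner (\<lambda>k. w (k,h)) (\<lambda>k. cnj (c j) * e j k))"
    unfolding Ef_def by (rule linner_sum_right[OF assms(3)])
      (auto intro: l2_scale onb_l2[OF assms(1)] w_slice(1)[OF assms(2)])
  also have "\<dots> = (\<Sum>j\<in>F. c j * coeff_vec e w j h)"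
    by (simp add: linner_scale_right coeff_lin)
  finally show ?thesis by simp
qed

lemma Uc_bound:
  assumes "onb e" "w \<in> l2" "finite F"
  shows "(\<lambda>h. \<Sum>j\<in>F. c j * coeff_vec e w j h) \<in> l2"
    and "sqn (\<lambda>h. \<Sum>j\<in>F. c j * coeff_vec e w j h) \<le> sqn w * (\<Sum>j\<in>F. (cmod (c j))^2)"
proof -
  define U where "U = (\<lambda>h. \<Sum>j\<in>F. c j * coeff_vec e w j h)"
  have pt: "(cmod (U h))^2 \<le> sqn (\<lambda>k. w (k,h)) * sqn (Ef e F c)" for h
  proof -
    have "cmod (U h) \<le> sqrt (sqn (\<lambda>k. w (k,h))) * sqrt (sqn (Ef e F c))"
      unfolding U_def Uc_linner[OF assms]
      by (rule linner_cs[OF w_slice(1)[OF assms(2)] Ef_l2[OF assms(1,3)]])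
    then have "(cmod (U h))^2 \<le> (sqrt (sqn (\<lambda>k. w (k,h))) * sqrt (sqn (Ef e F c)))^2"
      by (rule power_mono) simp
    then show ?thesis by (simp add: power_mult_distrib sqn_nonneg)
  qed
  have sm: "(\<lambda>h. sqn (\<lambda>k. w (k,h)) * sqn (Ef e F c)) summable_on UNIV"
    by (rule summable_on_cmult_left[OF w_slice(2)[OF assms(2)]])
  have s: "(\<lambda>h. (cmod (U h))^2) summable_on UNIV"
    by (rule summable_on_comparison_test[OF sm]) (use pt in auto)
  then show "(\<lambda>h. \<Sum>j\<in>F. c j * coeff_vec e w j h) \<in> l2" by (simp add: l2_iff U_def)
  have "sqn U \<le> infsum (\<lambda>h. sqn (\<lambda>k. w (k,h)) * sqn (Ef e F c)) UNIV"
    unfolding sqn_def[of U] by (rule infsum_mono[OF s sm pt])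
  also have "\<dots> = sqn w * (\<Sum>j\<in>F. (cmod (c j))^2)"
    using w_slice(3)[OF assms(2)] Ef_sqn[OF assms(1,3)] by (simp add: infsum_cmult_left')
  finally show "sqn (\<lambda>h. \<Sum>j\<in>F. c j * coeff_vec e w j h) \<le> sqn w * (\<Sum>j\<in>F. (cmod (c j))^2)"
    by (simp add: U_def)
qed

lemma u_l2:
  assumes "onb e" "w \<in> l2"
  shows "coeff_vec e w j \<in> l2"
  using Uc_bound(1)[OF assms, of "{j}" "\<lambda>_. 1"] by simp

lemma v_bound:
  assumes "hs A" "hs B"
  shows "kvec (kcomp B (ksharp A)) \<in> l2" and "sqn (kvec (kcomp B (ksharp A))) \<le> hsN A * hsN B"
proof -
  define v where "v = kvec (kcomp B (ksharp A))"
  have vv: "v (a,b) = infsum (\<lambda>c. B b c * A a c) UNIV" for a b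
    by (simp add: v_def kvec_def kcomp_def ksharp_def)
  have pt: "(cmod (v z))^2 \<le> (\<lambda>(a,b). sqn (A a) * sqn (B b)) z" for z
  proof (cases z)
    case (Pair a b)
    show ?thesis unfolding Pair vv using cs_sq[OF hs_fub(1)[OF assms(2)] hs_fub(1)[OF assms(1)], of b a]
      by (simp add: mult.commute)
  qed
  note P = prod_nonneg_summable[of "\<lambda>a. sqn (A a)" "\<lambda>b. sqn (B b)",
      OF hs_fub(3)[OF assms(1)] hs_fub(3)[OF assms(2)] sqn_nonneg sqn_nonneg]
  have s: "(\<lambda>z. (cmod (v z))^2) summable_on UNIV"
    by (rule summable_on_comparison_test[OF P(1)]) (use pt in auto)
  then show "kvec (kcomp B (ksharp A)) \<in> l2" by (simp add: l2_iff v_def)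
  have "sqn v \<le> infsum (\<lambda>(a,b). sqn (A a) * sqn (B b)) UNIV"
    unfolding sqn_def[of v] by (rule infsum_mono[OF s P(1) pt])
  also have "\<dots> = hsN A * hsN B" using P(2) hs_fub(4)[OF assms(1)] hs_fub(4)[OF assms(2)] by simp
  finally show "sqn (kvec (kcomp B (ksharp A))) \<le> hsN A * hsN B" by (simp add: v_def)
qed

section \<open>The operator W\<close>

definition Kf :: "('a \<Rightarrow> 'c \<Rightarrow> complex) \<Rightarrow> ('b \<Rightarrow> 'c \<Rightarrow> complex) \<Rightarrow> 'c \<times> 'c \<Rightarrow> 'a \<times> 'b \<Rightarrow> complex" where
  "Kf A B g p = cnj (A (fst p) (fst g)) * cnj (B (snd p) (snd g))"

definition Wv :: "('a \<Rightarrow> 'c \<Rightarrow> complex) \<Rightarrow> ('b \<Rightarrow> 'c \<Rightarrow> complex) \<Rightarrow> ('a \<times> 'b \<Rightarrow> complex) \<Rightarrow> 'c \<times> 'c \<Rightarrow> complex" where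
  "Wv A B U g = infsum (\<lambda>p. Kf A B g p * U p) UNIV"

lemma Kf_l2:
  assumes "hs A" "hs B"
  shows "Kf A B g \<in> l2" "sqn (Kf A B g) = sqn (\<lambda>a. A a (fst g)) * sqn (\<lambda>b. B b (snd g))"
proof -
  have e: "Kf A B g = (\<lambda>(a,b). cnj (A a (fst g)) * cnj (B b (snd g)))"
    by (auto simp: Kf_def)
  note T = l2_tensor[OF l2_cnj[OF hs_fub(2)[OF assms(1)]] l2_cnj[OF hs_fub(2)[OF assms(2)]]]
  show "Kf A B g \<in> l2" unfolding e using T(1) .
  show "sqn (Kf A B g) = sqn (\<lambda>a. A a (fst g)) * sqn (\<lambda>b. B b (snd g))"
    unfolding e using T(2) by (simp add: sqn_cnj)
qed

lemma Kf_sum: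
  assumes "hs A" "hs B"
  shows "(\<lambda>g. sqn (Kf A B g)) summable_on UNIV" "infsum (\<lambda>g. sqn (Kf A B g)) UNIV = hsN A * hsN B"
proof -
  note P = prod_nonneg_summable[of "\<lambda>c. sqn (\<lambda>a. A a c)" "\<lambda>c. sqn (\<lambda>b. B b c)",
      OF hs_fub(5)[OF assms(1)] hs_fub(5)[OF assms(2)] sqn_nonneg sqn_nonneg]
  have e: "(\<lambda>g. sqn (Kf A B g)) = (\<lambda>(c,c'). sqn (\<lambda>a. A a c) * sqn (\<lambda>b. B b c'))"
    by (auto simp: Kf_l2[OF assms])
  show "(\<lambda>g. sqn (Kf A B g)) summable_on UNIV" unfolding e by (rule P(1))
  show "infsum (\<lambda>g. sqn (Kf A B g)) UNIV = hsN A * hsN B" unfolding e P(2)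
    using hs_fub(6)[OF assms(1)] hs_fub(6)[OF assms(2)] by simp
qed

lemma Wv_l2:
  assumes "hs A" "hs B" "U \<in> l2"
  shows "Wv A B U \<in> l2" "sqn (Wv A B U) \<le> hsN A * hsN B * sqn U"
proof -
  have pt: "(cmod (Wv A B U g))^2 \<le> sqn (Kf A B g) * sqn U" for g
    unfolding Wv_def by (rule cs_sq[OF Kf_l2(1)[OF assms(1,2)] assms(3)])
  have sm: "(\<lambda>g. sqn (Kf A B g) * sqn U) summable_on UNIV"
    by (rule summable_on_cmult_left[OF Kf_sum(1)[OF assms(1,2)]])
  have s: "(\<lambda>g. (cmod (Wv A B U g))^2) summable_on UNIV"
    by (rule summable_on_comparison_test[OF sm]) (use pt in auto)
  then show "Wv A B U \<in> l2" by (simp add: l2_iff)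
  have "sqn (Wv A B U) \<le> infsum (\<lambda>g. sqn (Kf A B g) * sqn U) UNIV"
    unfolding sqn_def[of "Wv A B U"] by (rule infsum_mono[OF s sm pt])
  also have "\<dots> = hsN A * hsN B * sqn U"
    using Kf_sum(2)[OF assms(1,2)] by (simp add: infsum_cmult_left')
  finally show "sqn (Wv A B U) \<le> hsN A * hsN B * sqn U" .
qed

lemma Wv_lin:
  assumes "hs A" "hs B" "finite F" "\<And>j. j \<in> F \<Longrightarrow> f j \<in> l2"
  shows "Wv A B (\<lambda>p. \<Sum>j\<in>F. c j * f j p) = (\<lambda>g. \<Sum>j\<in>F. c j * Wv A B (f j) g)"
proof
  fix g
  have "Wv A B (\<lambda>p. \<Sum>j\<in>F. c j * f j p) g = infsum (\<lambda>p. \<Sum>j\<in>F. c j * (Kf A B g p * f j p)) UNIV"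
    unfolding Wv_def by (simp add: sum_distrib_left mult.left_commute)
  also have "\<dots> = (\<Sum>j\<in>F. infsum (\<lambda>p. c j * (Kf A B g p * f j p)) UNIV)"
  proof (rule infsum_sum_fin[OF assms(3)])
    fix j assume "j \<in> F"
    then show "(\<lambda>p. c j * (Kf A B g p * f j p)) summable_on UNIV"
      by (intro summable_on_cmult_right l2_prod_summable Kf_l2(1)[OF assms(1,2)] assms(4))
  qed
  also have "\<dots> = (\<Sum>j\<in>F. c j * Wv A B (f j) g)"
    by (simp add: infsum_cmult_right' Wv_def)
  finally show "Wv A B (\<lambda>p. \<Sum>j\<in>F. c j * f j p) g = (\<Sum>j\<in>F. c j * Wv A B (f j) g)" .
qed



lemma slice_theta:
  "slice (theta w w) (e i) (e j) h h' = coeff_vec e w i h * cnj (coeff_vec e w j h')"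
proof -
  have inner: "infsum (\<lambda>k'. cnj (e i k) * theta w w (k, h) (k', h') * e j k') UNIV
      = (cnj (e i k) * w (k,h)) * cnj (coeff_vec e w j h')" for k
  proof -
    have "infsum (\<lambda>k'. cnj (e i k) * theta w w (k, h) (k', h') * e j k') UNIV
        = infsum (\<lambda>k'. (cnj (e i k) * w (k,h)) * (cnj (w (k',h')) * e j k')) UNIV"
      unfolding theta_def by (intro infsum_cong) (simp add: ac_simps)
    also have "\<dots> = (cnj (e i k) * w (k,h)) * infsum (\<lambda>k'. cnj (w (k',h')) * e j k') UNIV"
      by (rule infsum_cmult_right')
    also have "infsum (\<lambda>k'. cnj (w (k',h')) * e j k') UNIV = cnj (coeff_vec e w j h')"
      unfolding coeff_vec_def infsum_cnj[symmetric] by (intro infsum_cong) (simp add: mult.commute)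
    finally show ?thesis .
  qed
  have "slice (theta w w) (e i) (e j) h h'
      = infsum (\<lambda>k. (cnj (e i k) * w (k,h)) * cnj (coeff_vec e w j h')) UNIV"
    unfolding slice_def by (intro infsum_cong) (rule inner)
  also have "\<dots> = coeff_vec e w i h * cnj (coeff_vec e w j h')"
    unfolding coeff_vec_def by (rule infsum_cmult_left')
  finally show ?thesis .
qed

lemma star_identity:
  assumes A: "hs A" and B: "hs B" and U: "U \<in> l2" and U': "U' \<in> l2"
  shows "infsum (\<lambda>(p,q). ktensor (kcomp A (kadj A)) (kcomp B (kadj B)) p q * (cnj (U p) * U' q)) UNIV
       = linner (Wv A B U') (Wv A B U)"
proof -
  define f1 where "f1 g p = cnj (Kf A B g p) * cnj (U p)" for g p
  define f2 where "f2 g q = Kf A B g q * U' q" for g q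
  define G where "G z = f1 (fst z) (fst (snd z)) * f2 (fst z) (snd (snd z))" for z
  have K: "Kf A B g \<in> l2" for g by (rule Kf_l2(1)[OF A B])
  have a1: "(\<lambda>p. cmod (f1 g p)) summable_on UNIV" for g
    using l2_prod_abs[OF l2_cnj[OF K] l2_cnj[OF U]] by (simp add: f1_def norm_mult)
  have a2: "(\<lambda>q. cmod (f2 g q)) summable_on UNIV" for g
    using l2_prod_abs[OF K U'] by (simp add: f2_def norm_mult)
  have b1: "infsum (\<lambda>p. cmod (f1 g p)) UNIV \<le> sqrt (sqn (Kf A B g)) * sqrt (sqn U)" for g
    using cs_abs[OF l2_cnj[OF K] l2_cnj[OF U]] by (simp add: f1_def norm_mult sqn_cnj)
  have b2: "infsum (\<lambda>q. cmod (f2 g q)) UNIV \<le> sqrt (sqn (Kf A B g)) * sqrt (sqn U')" for g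
    using cs_abs[OF K U'] by (simp add: f2_def norm_mult)
  have Gy: "(\<lambda>y. G (g,y)) = (\<lambda>(p,q). f1 g p * f2 g q)" for g
    by (auto simp: G_def)
  have inner_s: "(\<lambda>y. cmod (G (g,y))) summable_on UNIV" for g
  proof -
    have "(\<lambda>y. cmod (G (g,y))) = (\<lambda>(p,q). cmod (f1 g p * f2 g q))" by (auto simp: G_def)
    then show ?thesis using prod_complex(1)[OF a1 a2] by simp
  qed
  have inner_v: "infsum (\<lambda>y. cmod (G (g,y))) UNIV
      = infsum (\<lambda>p. cmod (f1 g p)) UNIV * infsum (\<lambda>q. cmod (f2 g q)) UNIV" for g
  proof -
    have "(\<lambda>y. cmod (G (g,y))) = (\<lambda>(p,q). cmod (f1 g p) * cmod (f2 g q))"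
      by (auto simp: G_def norm_mult)
    then show ?thesis using prod_nonneg_summable(2)[OF a1 a2] by simp
  qed
  have outer_b: "infsum (\<lambda>y. cmod (G (g,y))) UNIV \<le> sqn (Kf A B g) * (sqrt (sqn U) * sqrt (sqn U'))" for g
  proof -
    have n1: "0 \<le> infsum (\<lambda>p. cmod (f1 g p)) UNIV" by (rule infsum_nonneg) simp
    have "infsum (\<lambda>y. cmod (G (g,y))) UNIV
        \<le> (sqrt (sqn (Kf A B g)) * sqrt (sqn U)) * (sqrt (sqn (Kf A B g)) * sqrt (sqn U'))"
      unfolding inner_v by (rule mult_mono[OF b1 b2]) (auto intro: infsum_nonneg simp: sqn_nonneg)
    also have "\<dots> = sqn (Kf A B g) * (sqrt (sqn U) * sqrt (sqn U'))"
      by (simp add: sqn_nonneg)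
    finally show ?thesis .
  qed
  have outer_s: "(\<lambda>g. infsum (\<lambda>y. cmod (G (g,y))) UNIV) summable_on UNIV"
  proof (rule summable_on_comparison_test)
    show "(\<lambda>g. sqn (Kf A B g) * (sqrt (sqn U) * sqrt (sqn U'))) summable_on UNIV"
      by (rule summable_on_cmult_left[OF Kf_sum(1)[OF A B]])
  qed (use outer_b in \<open>auto intro: infsum_nonneg\<close>)
  have Gs: "G summable_on UNIV" by (rule sigma_abs(2)[OF inner_s outer_s])
  note F = fubini_pair'[OF Gs]
  have side1: "infsum (\<lambda>y. G (g,y)) UNIV = cnj (Wv A B U g) * Wv A B U' g" for g
  proof -
    have "infsum (\<lambda>y. G (g,y)) UNIV = infsum (\<lambda>(p,q). f1 g p * f2 g q) UNIV" by (simp add: Gy)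
    also have "\<dots> = infsum (f1 g) UNIV * infsum (f2 g) UNIV" by (rule prod_complex(3)[OF a1 a2])
    also have "infsum (f1 g) UNIV = cnj (Wv A B U g)"
      unfolding Wv_def f1_def infsum_cnj[symmetric] by simp
    also have "infsum (f2 g) UNIV = Wv A B U' g" unfolding Wv_def f2_def ..
    finally show ?thesis .
  qed
  have side2: "infsum (\<lambda>g. G (g,y)) UNIV
      = (\<lambda>(p,q). ktensor (kcomp A (kadj A)) (kcomp B (kadj B)) p q * (cnj (U p) * U' q)) y" for y
  proof -
    obtain a b a' b' where y: "y = ((a,b),(a',b'))" by (metis prod.collapse)
    define r1 where "r1 c = A a c * cnj (A a' c)" for c
    define r2 where "r2 c = B b c * cnj (B b' c)" for c
    have s1: "(\<lambda>c. cmod (r1 c)) summable_on UNIV"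
      using l2_prod_abs[OF hs_fub(1)[OF A] l2_cnj[OF hs_fub(1)[OF A]], of a a'] by (simp add: r1_def norm_mult)
    have s2: "(\<lambda>c. cmod (r2 c)) summable_on UNIV"
      using l2_prod_abs[OF hs_fub(1)[OF B] l2_cnj[OF hs_fub(1)[OF B]], of b b'] by (simp add: r2_def norm_mult)
    have "infsum (\<lambda>g. G (g,y)) UNIV = infsum (\<lambda>g. (cnj (U (a,b)) * U' (a',b')) * (\<lambda>(c,c'). r1 c * r2 c') g) UNIV"
      unfolding y G_def f1_def f2_def Kf_def r1_def r2_def
      by (intro infsum_cong) (auto simp: ac_simps)
    also have "\<dots> = (cnj (U (a,b)) * U' (a',b')) * infsum (\<lambda>(c,c'). r1 c * r2 c') UNIV"
      by (rule infsum_cmult_right')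
    also have "infsum (\<lambda>(c,c'). r1 c * r2 c') UNIV = infsum r1 UNIV * infsum r2 UNIV"
      by (rule prod_complex(3)[OF s1 s2])
    also have "infsum r1 UNIV * infsum r2 UNIV = kcomp A (kadj A) a a' * kcomp B (kadj B) b b'"
      unfolding r1_def[abs_def] r2_def[abs_def] kcomp_def kadj_def by simp
    finally show ?thesis by (simp add: y ktensor_def ac_simps)
  qed
  have "infsum (\<lambda>(p,q). ktensor (kcomp A (kadj A)) (kcomp B (kadj B)) p q * (cnj (U p) * U' q)) UNIV
      = infsum (\<lambda>y. infsum (\<lambda>g. G (g,y)) UNIV) UNIV"
    by (intro infsum_cong) (simp add: side2)
  also have "\<dots> = infsum G UNIV" using F(2) by simp
  also have "\<dots> = infsum (\<lambda>g. infsum (\<lambda>y. G (g,y)) UNIV) UNIV" using F(1) by simp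
  also have "\<dots> = infsum (\<lambda>g. Wv A B U' g * cnj (Wv A B U g)) UNIV"
    by (intro infsum_cong) (simp add: side1 mult.commute)
  also have "\<dots> = linner (Wv A B U') (Wv A B U)" by (simp add: linner_def)
  finally show ?thesis .
qed

lemma star_entry:
  assumes "onb e" "w \<in> l2" "hs A" "hs B"
  shows "star (theta w w) e (kcomp A (kadj A)) (kcomp B (kadj B)) i j
       = linner (Wv A B (coeff_vec e w j)) (Wv A B (coeff_vec e w i))"
proof -
  have "star (theta w w) e (kcomp A (kadj A)) (kcomp B (kadj B)) i j
      = infsum (\<lambda>(p,q). ktensor (kcomp A (kadj A)) (kcomp B (kadj B)) p q
          * (cnj (coeff_vec e w i p) * coeff_vec e w j q)) UNIV"
    unfolding star_def hs_inner_def slice_theta by simp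
  also have "\<dots> = linner (Wv A B (coeff_vec e w j)) (Wv A B (coeff_vec e w i))"
    by (rule star_identity[OF assms(3,4) u_l2[OF assms(1,2)] u_l2[OF assms(1,2)]])
  finally show ?thesis .
qed

lemma trace_identity:
  assumes A: "hs A" and B: "hs B" and U: "U \<in> l2"
  shows "(\<lambda>c. Wv A B U (c,c)) summable_on UNIV"
    and "linner U (kvec (kcomp B (ksharp A))) = infsum (\<lambda>c. Wv A B U (c,c)) UNIV"
proof -
  define h where "h z = Kf A B (fst z, fst z) (snd z) * U (snd z)" for z
  have K: "Kf A B g \<in> l2" for g by (rule Kf_l2(1)[OF A B])
  have inner_s: "(\<lambda>p. cmod (h (c,p))) summable_on UNIV" for c
    using l2_prod_abs[OF K U] by (simp add: h_def norm_mult)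
  have bnd: "infsum (\<lambda>p. cmod (h (c,p))) UNIV
      \<le> ((sqn (\<lambda>a. A a c) + sqn (\<lambda>b. B b c)) / 2) * sqrt (sqn U)" for c
  proof -
    have "infsum (\<lambda>p. cmod (h (c,p))) UNIV \<le> sqrt (sqn (Kf A B (c,c))) * sqrt (sqn U)"
      using cs_abs[OF K U] by (simp add: h_def norm_mult)
    also have "sqrt (sqn (Kf A B (c,c))) = sqrt (sqn (\<lambda>a. A a c)) * sqrt (sqn (\<lambda>b. B b c))"
      by (simp add: Kf_l2(2)[OF A B] real_sqrt_mult)
    finally have 1: "infsum (\<lambda>p. cmod (h (c,p))) UNIV
        \<le> sqrt (sqn (\<lambda>a. A a c)) * sqrt (sqn (\<lambda>b. B b c)) * sqrt (sqn U)" .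
    have 2: "sqrt (sqn (\<lambda>a. A a c)) * sqrt (sqn (\<lambda>b. B b c)) \<le> (sqn (\<lambda>a. A a c) + sqn (\<lambda>b. B b c)) / 2"
      using amgm2[of "sqrt (sqn (\<lambda>a. A a c))" "sqrt (sqn (\<lambda>b. B b c))"] by (simp add: sqn_nonneg)
    show ?thesis by (rule order_trans[OF 1 mult_right_mono[OF 2]]) (simp add: sqn_nonneg)
  qed
  have outer_s: "(\<lambda>c. infsum (\<lambda>p. cmod (h (c,p))) UNIV) summable_on UNIV"
  proof (rule summable_on_comparison_test)
    have "(\<lambda>c. (sqn (\<lambda>a. A a c) + sqn (\<lambda>b. B b c)) * inverse 2 * sqrt (sqn U)) summable_on UNIV"
      by (intro summable_on_cmult_left summable_on_add hs_fub(5)[OF A] hs_fub(5)[OF B])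
    then show "(\<lambda>c. ((sqn (\<lambda>a. A a c) + sqn (\<lambda>b. B b c)) / 2) * sqrt (sqn U)) summable_on UNIV"
      by (simp only: divide_inverse)
  qed (use bnd in \<open>auto intro: infsum_nonneg\<close>)
  have hs: "h summable_on UNIV" by (rule sigma_abs(2)[OF inner_s outer_s])
  note F = fubini_pair'[OF hs]
  have d: "Wv A B U (c,c) = infsum (\<lambda>p. h (c,p)) UNIV" for c by (simp add: Wv_def h_def)
  show "(\<lambda>c. Wv A B U (c,c)) summable_on UNIV" unfolding d by (rule F(3))
  have pv: "U p * cnj (kvec (kcomp B (ksharp A)) p) = infsum (\<lambda>c. h (c,p)) UNIV" for p
  proof -
    obtain a b where p: "p = (a,b)" by (metis prod.collapse)
    have "cnj (kvec (kcomp B (ksharp A)) p) = infsum (\<lambda>c. Kf A B (c,c) p) UNIV"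
      unfolding p kvec_def kcomp_def ksharp_def Kf_def prod.case fst_conv snd_conv
      by (subst infsum_cnj[symmetric]) (rule infsum_cong, simp add: mult.commute)
    then have "U p * cnj (kvec (kcomp B (ksharp A)) p) = U p * infsum (\<lambda>c. Kf A B (c,c) p) UNIV" by simp
    also have "\<dots> = infsum (\<lambda>c. U p * Kf A B (c,c) p) UNIV" by (rule infsum_cmult_right'[symmetric])
    finally show ?thesis by (simp add: h_def mult.commute)
  qed
  have "linner U (kvec (kcomp B (ksharp A))) = infsum (\<lambda>p. infsum (\<lambda>c. h (c,p)) UNIV) UNIV"
    unfolding linner_def by (simp add: pv)
  also have "\<dots> = infsum h UNIV" using F(2) by simp
  also have "\<dots> = infsum (\<lambda>c. Wv A B U (c,c)) UNIV" using F(1) by (simp add: d)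
  finally show "linner U (kvec (kcomp B (ksharp A))) = infsum (\<lambda>c. Wv A B U (c,c)) UNIV" .
qed



section \<open>Rank lemmas\<close>

lemma delta_sum:
  assumes "finite S" "a \<in> S"
  shows "(\<Sum>s\<in>S. (if s = a then 1 else 0) * f s) = (f a :: complex)"
proof -
  have "(\<Sum>s\<in>S. (if s = a then 1 else 0) * f s) = (\<Sum>s\<in>S. if s = a then f s else 0)"
    by (rule sum.cong) auto
  then show ?thesis using assms by simp
qed

lemma lin_indep_empty: "lin_indep_fun {}"
  by (simp add: lin_indep_fun_def)

lemma lin_indep_insert:
  assumes "lin_indep_fun S" "finite S" "y \<notin> fspan S" "y \<notin> S"
  shows "lin_indep_fun (insert y S)"
  unfolding lin_indep_fun_def
proof (intro allI impI)
  fix c assume z: "(\<lambda>p. \<Sum>s\<in>insert y S. c s * s p) = (\<lambda>_. 0)"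
  have zp: "c y * y p + (\<Sum>s\<in>S. c s * s p) = 0" for p
    using fun_cong[OF z, of p] assms(2,4) by simp
  have cy: "c y = 0"
  proof (rule ccontr)
    assume n: "c y \<noteq> 0"
    have "y = (\<lambda>p. \<Sum>s\<in>S. (- c s / c y) * s p)"
    proof
      fix p
      have "c y * y p = - (\<Sum>s\<in>S. c s * s p)" using zp[of p] by (simp add: eq_neg_iff_add_eq_0)
      then have "y p = - (\<Sum>s\<in>S. c s * s p) / c y" using n by (simp add: field_simps)
      also have "\<dots> = (\<Sum>s\<in>S. c s * s p) * (- inverse (c y))" by (simp add: divide_inverse)
      also have "\<dots> = (\<Sum>s\<in>S. (c s * s p) * (- inverse (c y)))" by (rule sum_distrib_right)
      also have "\<dots> = (\<Sum>s\<in>S. (- c s / c y) * s p)"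
        by (intro sum.cong refl) (simp add: divide_inverse)
      finally show "y p = (\<Sum>s\<in>S. (- c s / c y) * s p)" .
    qed
    then have "y \<in> fspan S" by (rule fspanI)
    then show False using assms(3) by simp
  qed
  have "(\<lambda>p. \<Sum>s\<in>S. c s * s p) = (\<lambda>_. 0)" using zp cy by auto
  then have "\<forall>s\<in>S. c s = 0" using assms(1) by (simp add: lin_indep_fun_def)
  then show "\<forall>s\<in>insert y S. c s = 0" using cy by simp
qed

lemma maximal_indep:
  fixes V :: "('p \<Rightarrow> complex) set"
  assumes bnd: "\<And>S. finite S \<Longrightarrow> S \<subseteq> V \<Longrightarrow> lin_indep_fun S \<Longrightarrow> card S \<le> m"
  shows "\<exists>S. finite S \<and> S \<subseteq> V \<and> card S \<le> m \<and> V \<subseteq> fspan S"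
proof -
  define N where "N = {card S | S. finite S \<and> S \<subseteq> V \<and> lin_indep_fun S}"
  have "0 \<in> N" unfolding N_def using lin_indep_empty by force
  have Nb: "N \<subseteq> {..m}" unfolding N_def using bnd by auto
  then have fN: "finite N" by (rule finite_subset) simp
  have "Max N \<in> N" using fN \<open>0 \<in> N\<close> by (intro Max_in) auto
  then obtain S where S: "finite S" "S \<subseteq> V" "lin_indep_fun S" "card S = Max N"
    unfolding N_def by auto
  have "V \<subseteq> fspan S"
  proof
    fix y assume y: "y \<in> V"
    show "y \<in> fspan S"
    proof (rule ccontr)
      assume ny: "y \<notin> fspan S"
      have yS: "y \<notin> S" using ny fspan_elem[OF S(1)] by blast
      have li: "lin_indep_fun (insert y S)" by (rule lin_indep_insert[OF S(3,1) ny yS])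
      have "card (insert y S) \<in> N" unfolding N_def using S y li by blast
      then have "card (insert y S) \<le> Max N" using fN by simp
      then show False using S(1,4) yS by simp
    qed
  qed
  moreover have "card S \<le> m" using bnd S by blast
  ultimately show ?thesis using S by blast
qed

lemma krank_le:
  assumes "krank X \<le> enat m" "finite S" "S \<subseteq> kapply X ` l2" "lin_indep_fun S"
  shows "card S \<le> m"
proof -
  have h: "enat (card S) \<le> krank X" unfolding krank_def
    by (rule Sup_upper) (use assms(2-4) in blast)
  show ?thesis using order_trans[OF h assms(1)] by simp
qed

lemma range_span:
  assumes "hs K" "krank K \<le> enat m"
  shows "\<exists>G. finite G \<and> G \<subseteq> l2 \<and> card G \<le> m \<and> (\<forall>x\<in>l2. kapply K x \<in> fspan G)"
proof -
  obtain G where G: "finite G" "G \<subseteq> kapply K ` l2" "card G \<le> m" "kapply K ` l2 \<subseteq> fspan G"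
    using maximal_indep[of "kapply K ` l2" m] krank_le[OF assms(2)] by blast
  have "G \<subseteq> l2" using G(2) kapply_l2(1)[OF assms(1)] by blast
  then show ?thesis using G by blast
qed

lemma adj_kernel:
  assumes "hs A" "x \<in> l2" "kapply A (kapply (kadj A) x) = (\<lambda>_. 0)"
  shows "kapply (kadj A) x = (\<lambda>_. 0)"
proof -
  have "linner (kapply (kcomp A (kadj A)) x) x = complex_of_real (sqn (kapply (kadj A) x))"
    by (rule kapply_gram[OF assms(1,2)])
  moreover have "kapply (kcomp A (kadj A)) x = (\<lambda>_. 0)"
    using kapply_comp[OF assms(1) hs_kadj[OF assms(1)] assms(2)] assms(3) by simp
  ultimately have "sqn (kapply (kadj A) x) = 0" by (simp add: linner_def)
  then show ?thesis using sqn_zero_imp[OF kapply_l2(1)[OF hs_kadj[OF assms(1)] assms(2)]] by auto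
qed

lemma range_adj_span:
  assumes A: "hs A" and r: "krank (kcomp A (kadj A)) \<le> enat m"
  shows "\<exists>G. finite G \<and> G \<subseteq> l2 \<and> card G \<le> m \<and> (\<forall>x\<in>l2. kapply (kadj A) x \<in> fspan G)"
proof -
  have A': "hs (kadj A)" by (rule hs_kadj[OF A])
  define V where "V = kapply (kadj A) ` l2"
  have Vl: "V \<subseteq> l2" unfolding V_def using kapply_l2(1)[OF A'] by blast
  have bnd: "card S \<le> m" if S: "finite S" "S \<subseteq> V" "lin_indep_fun S" for S
  proof -
    have "\<forall>s\<in>S. \<exists>x. x \<in> l2 \<and> s = kapply (kadj A) x" using S(2) unfolding V_def by blast
    then obtain xs where xs: "\<And>s. s \<in> S \<Longrightarrow> xs s \<in> l2 \<and> s = kapply (kadj A) (xs s)" by metis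
    have sl: "s \<in> l2" if "s \<in> S" for s using that S(2) Vl by blast
    have comb: "(\<lambda>p. \<Sum>s\<in>S. d s * s p) = kapply (kadj A) (\<lambda>q. \<Sum>s\<in>S. d s * xs s q)" for d
    proof -
      have "kapply (kadj A) (\<lambda>q. \<Sum>s\<in>S. d s * xs s q) = (\<lambda>p. \<Sum>s\<in>S. d s * kapply (kadj A) (xs s) p)"
        by (rule kapply_sum[OF S(1) A']) (use xs in blast)
      also have "\<dots> = (\<lambda>p. \<Sum>s\<in>S. d s * s p)"
        by (intro ext sum.cong refl) (use xs in metis)
      finally show ?thesis by simp
    qed
    have combl: "(\<lambda>q. \<Sum>s\<in>S. d s * xs s q) \<in> l2" for d
      by (rule l2_sum[OF S(1)]) (use xs l2_scale in blast)
    have Alin: "kapply A (\<lambda>q. \<Sum>s\<in>S. d s * s q) = (\<lambda>p. \<Sum>s\<in>S. d s * kapply A s p)" for d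
      by (rule kapply_sum[OF S(1) A sl])
    define T where "T = kapply A ` S"
    have inj: "inj_on (kapply A) S"
    proof (rule inj_onI)
      fix s1 s2 assume s: "s1 \<in> S" "s2 \<in> S" "kapply A s1 = kapply A s2"
      define d where "d s = (if s = s1 then 1 else 0) - (if s = s2 then (1::complex) else 0)" for s
      have e1: "(\<lambda>p. \<Sum>s\<in>S. d s * s p) = (\<lambda>p. s1 p - s2 p)"
        unfolding d_def using S(1) s(1,2) by (auto simp: left_diff_distrib sum_subtractf delta_sum)
      have e2: "(\<lambda>p. \<Sum>s\<in>S. d s * kapply A s p) = (\<lambda>p. kapply A s1 p - kapply A s2 p)"
        unfolding d_def using S(1) s(1,2) by (auto simp: left_diff_distrib sum_subtractf delta_sum)
      have "kapply A (kapply (kadj A) (\<lambda>q. \<Sum>s\<in>S. d s * xs s q)) = (\<lambda>_. 0)"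
        using Alin[of d] comb[of d] e2 s(3) by simp
      then have "kapply (kadj A) (\<lambda>q. \<Sum>s\<in>S. d s * xs s q) = (\<lambda>_. 0)"
        by (rule adj_kernel[OF A combl])
      then have "(\<lambda>p. s1 p - s2 p) = (\<lambda>_. 0)" using comb[of d] e1 by simp
      then show "s1 = s2" by (auto simp: fun_eq_iff)
    qed
    have TR: "T \<subseteq> kapply (kcomp A (kadj A)) ` l2"
    proof
      fix t assume "t \<in> T"
      then obtain s where s: "s \<in> S" "t = kapply A s" unfolding T_def by blast
      then have "t = kapply (kcomp A (kadj A)) (xs s)"
        using kapply_comp[OF A A', of "xs s"] xs[OF s(1)] by simp
      then show "t \<in> kapply (kcomp A (kadj A)) ` l2" using xs[OF s(1)] by blast
    qed
    have TI: "lin_indep_fun T"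
      unfolding lin_indep_fun_def
    proof (intro allI impI)
      fix d assume z: "(\<lambda>p. \<Sum>t\<in>T. d t * t p) = (\<lambda>_. 0)"
      have "(\<lambda>p. \<Sum>t\<in>T. d t * t p) = (\<lambda>p. \<Sum>s\<in>S. d (kapply A s) * kapply A s p)"
        unfolding T_def by (intro ext) (simp add: sum.reindex[OF inj])
      also have "\<dots> = kapply A (\<lambda>q. \<Sum>s\<in>S. d (kapply A s) * s q)" by (rule Alin[symmetric])
      also have "\<dots> = kapply A (kapply (kadj A) (\<lambda>q. \<Sum>s\<in>S. d (kapply A s) * xs s q))"
        by (simp add: comb)
      finally have "kapply A (kapply (kadj A) (\<lambda>q. \<Sum>s\<in>S. d (kapply A s) * xs s q)) = (\<lambda>_. 0)"
        using z by simp
      then have "kapply (kadj A) (\<lambda>q. \<Sum>s\<in>S. d (kapply A s) * xs s q) = (\<lambda>_. 0)"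
        by (rule adj_kernel[OF A combl])
      then have "(\<lambda>p. \<Sum>s\<in>S. d (kapply A s) * s p) = (\<lambda>_. 0)" by (simp add: comb)
      then have "\<forall>s\<in>S. d (kapply A s) = 0"
        using spec[OF S(3)[unfolded lin_indep_fun_def], of "\<lambda>s. d (kapply A s)"] by simp
      then show "\<forall>t\<in>T. d t = 0" unfolding T_def by blast
    qed
    have "card T \<le> m" by (rule krank_le[OF r _ TR TI]) (simp add: T_def S(1))
    then show ?thesis using card_image[OF inj] by (simp add: T_def)
  qed
  obtain G where G: "finite G" "G \<subseteq> V" "card G \<le> m" "V \<subseteq> fspan G"
    using maximal_indep[of V m] bnd by blast
  show ?thesis using G Vl unfolding V_def by blast
qed

lemma fspan_map:
  assumes "hs X" "finite S" "S \<subseteq> l2" "y \<in> fspan S"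
  shows "kapply X y \<in> fspan (kapply X ` S)"
proof -
  obtain \<alpha> where y: "y = (\<lambda>x. \<Sum>s\<in>S. \<alpha> s * s x)" using assms(4) by (auto simp: fspan_def)
  have "kapply X y = (\<lambda>p. \<Sum>s\<in>S. \<alpha> s * kapply X s p)"
    unfolding y by (rule kapply_sum[OF assms(2,1)]) (use assms(3) in blast)
  also have "\<dots> = (\<lambda>p. \<Sum>t\<in>kapply X ` S. (\<Sum>s\<in>{s\<in>S. kapply X s = t}. \<alpha> s) * t p)"
  proof
    fix p
    have "(\<Sum>s\<in>S. \<alpha> s * kapply X s p)
        = (\<Sum>t\<in>kapply X ` S. \<Sum>s\<in>{s\<in>S. kapply X s = t}. \<alpha> s * kapply X s p)"
      by (rule sum.image_gen[OF assms(2)])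
    also have "\<dots> = (\<Sum>t\<in>kapply X ` S. (\<Sum>s\<in>{s\<in>S. kapply X s = t}. \<alpha> s) * t p)"
      by (intro sum.cong refl) (simp add: sum_distrib_right)
    finally show "(\<Sum>s\<in>S. \<alpha> s * kapply X s p)
        = (\<Sum>t\<in>kapply X ` S. (\<Sum>s\<in>{s\<in>S. kapply X s = t}. \<alpha> s) * t p)" .
  qed
  finally show ?thesis by (rule fspanI)
qed

lemma hs_transpose:
  assumes "hs X"
  shows "hs (\<lambda>q p. X p q)" "hsN (\<lambda>q p. X p q) = hsN X"
proof -
  show h: "hs (\<lambda>q p. X p q)"
    using assms summable_on_swap[of "\<lambda>(p,q). (cmod (X p q))^2" UNIV UNIV] by (simp add: hs_def)
  have "hsN (\<lambda>q p. X p q) = infsum (\<lambda>q. sqn (\<lambda>p. X p q)) UNIV" using hs_fub(4)[OF h] by simp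
  also have "\<dots> = hsN X" by (rule hs_fub(6)[OF assms])
  finally show "hsN (\<lambda>q p. X p q) = hsN X" .
qed



definition Uc :: "('i \<Rightarrow> 'k \<Rightarrow> complex) \<Rightarrow> ('k \<times> 'h \<Rightarrow> complex) \<Rightarrow> 'i set \<Rightarrow> ('i \<Rightarrow> complex) \<Rightarrow> 'h \<Rightarrow> complex" where
  "Uc e w F c = (\<lambda>h. \<Sum>j\<in>F. c j * coeff_vec e w j h)"

lemma Uc_l2: "onb e \<Longrightarrow> w \<in> l2 \<Longrightarrow> finite F \<Longrightarrow> Uc e w F c \<in> l2"
  unfolding Uc_def by (rule Uc_bound(1))

lemma Uc_sqn: "onb e \<Longrightarrow> w \<in> l2 \<Longrightarrow> finite F \<Longrightarrow> sqn (Uc e w F c) \<le> sqn w * (\<Sum>j\<in>F. (cmod (c j))^2)"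
  unfolding Uc_def by (rule Uc_bound(2))

lemma uspace_mem:
  assumes "onb e" "w \<in> l2" "finite F"
  shows "Uc e w F c \<in> Uspace e w"
proof -
  have "lnorm (\<lambda>h. Uc e w F c h - (\<Sum>i\<in>F. c i * coeff_vec e w i h)) = 0"
    by (simp add: Uc_def lnorm_def)
  then have "\<forall>\<epsilon>>0. \<exists>F' c'. finite F' \<and>
      lnorm (\<lambda>h. Uc e w F c h - (\<Sum>i\<in>F'. c' i * coeff_vec e w i h)) < \<epsilon>"
    using assms(3) by (metis)
  then show ?thesis unfolding Uspace_def using Uc_l2[OF assms] by blast
qed

lemma rank_uc:
  assumes "onb e" "w \<in> l2" "finite F"
  shows "krank (kunvec (Uc e w F c)) \<le> rstar e w"
  unfolding rstar_def by (rule SUP_upper[OF uspace_mem[OF assms]])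

lemma hs_kunvec: "U \<in> l2 \<Longrightarrow> hs (kunvec U)"
  unfolding hs_def kunvec_def l2_iff
  using summable_on_swap[of "\<lambda>z. (cmod (U z))^2" UNIV UNIV] by (simp add: case_prod_unfold)

lemma hs_curry: "U \<in> l2 \<Longrightarrow> hs (\<lambda>a b. U (a,b))"
  unfolding hs_def l2_iff by (simp add: case_prod_unfold)

lemma W_col:
  assumes A: "hs A" and B: "hs B" and U: "U \<in> l2"
  shows "Wv A B U (c,c') = kapply (kadj A) (\<lambda>a. infsum (\<lambda>b. cnj (B b c') * U (a,b)) UNIV) c"
    and "(\<lambda>a. infsum (\<lambda>b. cnj (B b c') * U (a,b)) UNIV) \<in> l2"
proof -
  have s: "(\<lambda>p. Kf A B (c,c') p * U p) summable_on UNIV"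
    by (rule l2_prod_summable[OF Kf_l2(1)[OF A B] U])
  have "Wv A B U (c,c') = infsum (\<lambda>a. infsum (\<lambda>b. Kf A B (c,c') (a,b) * U (a,b)) UNIV) UNIV"
    unfolding Wv_def by (rule fubini_pair'(1)[OF s])
  also have "\<dots> = kapply (kadj A) (\<lambda>a. infsum (\<lambda>b. cnj (B b c') * U (a,b)) UNIV) c"
    unfolding kapply_def kadj_def Kf_def
    by (intro infsum_cong) (simp add: infsum_cmult_right'[symmetric] mult.assoc)
  finally show "Wv A B U (c,c') = kapply (kadj A) (\<lambda>a. infsum (\<lambda>b. cnj (B b c') * U (a,b)) UNIV) c" .
  have "(\<lambda>a. infsum (\<lambda>b. cnj (B b c') * U (a,b)) UNIV) = kapply (\<lambda>a b. U (a,b)) (\<lambda>b. cnj (B b c'))"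
    unfolding kapply_def by (simp add: mult.commute)
  then show "(\<lambda>a. infsum (\<lambda>b. cnj (B b c') * U (a,b)) UNIV) \<in> l2"
    using kapply_l2(1)[OF hs_curry[OF U] l2_cnj[OF hs_fub(2)[OF B]]] by simp
qed

lemma W_row:
  assumes A: "hs A" and B: "hs B" and U: "U \<in> l2"
  shows "Wv A B U (c,c') = kapply (kadj B) (kapply (kunvec U) (\<lambda>a. cnj (A a c))) c'"
proof -
  have s: "(\<lambda>p. Kf A B (c,c') p * U p) summable_on UNIV"
    by (rule l2_prod_summable[OF Kf_l2(1)[OF A B] U])
  have "Wv A B U (c,c') = infsum (\<lambda>b. infsum (\<lambda>a. Kf A B (c,c') (a,b) * U (a,b)) UNIV) UNIV"
    unfolding Wv_def by (rule fubini_pair'(2)[OF s])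
  also have "\<dots> = kapply (kadj B) (kapply (kunvec U) (\<lambda>a. cnj (A a c))) c'"
    unfolding kapply_def kadj_def Kf_def kunvec_def
    by (intro infsum_cong) (simp add: infsum_cmult_right'[symmetric] ac_simps)
  finally show ?thesis .
qed

lemma trace_rank:
  assumes e: "onb e" and w: "w \<in> l2" and A: "hs A" and B: "hs B" and F: "finite F"
    and r: "krank (kcomp A (kadj A)) \<le> enat m \<or> krank (kcomp B (kadj B)) \<le> enat m \<or> rstar e w \<le> enat m"
  shows "(cmod (infsum (\<lambda>c. Wv A B (Uc e w F c0) (c,c)) UNIV))^2 \<le> real m * sqn (Wv A B (Uc e w F c0))"
proof -
  define U where "U = Uc e w F c0"
  have U: "U \<in> l2" unfolding U_def by (rule Uc_l2[OF e w F])
  define W0 where "W0 c c' = Wv A B U (c,c')" for c c'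
  have W0e: "(\<lambda>(p,q). W0 p q) = Wv A B U" by (auto simp: W0_def)
  have hW: "hs W0" unfolding hs_l2 W0e by (rule Wv_l2(1)[OF A B U])
  have nW: "hsN W0 = sqn (Wv A B U)" unfolding hsN_sqn W0e ..
  have dW: "infsum (\<lambda>c. W0 c c) UNIV = infsum (\<lambda>c. Wv A B U (c,c)) UNIV" by (simp add: W0_def)
  have rowcase: "(cmod (infsum (\<lambda>c. W0 c c) UNIV))^2 \<le> real m * hsN W0"
    if G: "finite G" "G \<subseteq> l2" "card G \<le> m" "\<And>c. W0 c \<in> fspan G" for G
    by (rule trace_bound(2)[OF hW G])
  consider "krank (kcomp A (kadj A)) \<le> enat m" | "krank (kcomp B (kadj B)) \<le> enat m"
    | "rstar e w \<le> enat m" using r by blast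
  then have "(cmod (infsum (\<lambda>c. W0 c c) UNIV))^2 \<le> real m * hsN W0"
  proof cases
    case 1
    obtain G where G: "finite G" "G \<subseteq> l2" "card G \<le> m" "\<forall>x\<in>l2. kapply (kadj A) x \<in> fspan G"
      using range_adj_span[OF A 1] by blast
    define Wt where "Wt c' c = W0 c c'" for c c'
    have hWt: "hs Wt" unfolding Wt_def by (rule hs_transpose(1)[OF hW])
    have nWt: "hsN Wt = hsN W0" unfolding Wt_def by (rule hs_transpose(2)[OF hW])
    have rows: "Wt c' \<in> fspan G" for c'
    proof -
      have "Wt c' = kapply (kadj A) (\<lambda>a. infsum (\<lambda>b. cnj (B b c') * U (a,b)) UNIV)"
        unfolding Wt_def W0_def using W_col(1)[OF A B U] by auto
      then show ?thesis using G(4) W_col(2)[OF A B U] by auto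
    qed
    have "(cmod (infsum (\<lambda>c. Wt c c) UNIV))^2 \<le> real m * hsN Wt"
      by (rule trace_bound(2)[OF hWt G(1-3) rows])
    then show ?thesis by (simp add: nWt Wt_def)
  next
    case 2
    obtain G where G: "finite G" "G \<subseteq> l2" "card G \<le> m" "\<forall>x\<in>l2. kapply (kadj B) x \<in> fspan G"
      using range_adj_span[OF B 2] by blast
    have rows: "W0 c \<in> fspan G" for c
    proof -
      have "W0 c = kapply (kadj B) (kapply (kunvec U) (\<lambda>a. cnj (A a c)))"
        unfolding W0_def using W_row[OF A B U] by auto
      moreover have "kapply (kunvec U) (\<lambda>a. cnj (A a c)) \<in> l2"
        by (rule kapply_l2(1)[OF hs_kunvec[OF U] l2_cnj[OF hs_fub(2)[OF A]]])
      ultimately show ?thesis using G(4) by auto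
    qed
    show ?thesis by (rule rowcase[OF G(1-3) rows])
  next
    case 3
    have rk: "krank (kunvec U) \<le> enat m"
      using rank_uc[OF e w F, of c0] 3 unfolding U_def by (rule order_trans)
    obtain S where S: "finite S" "S \<subseteq> l2" "card S \<le> m" "\<forall>x\<in>l2. kapply (kunvec U) x \<in> fspan S"
      using range_span[OF hs_kunvec[OF U] rk] by blast
    define G where "G = kapply (kadj B) ` S"
    have G: "finite G" "G \<subseteq> l2" "card G \<le> m"
      unfolding G_def using S kapply_l2(1)[OF hs_kadj[OF B]] card_image_le[OF S(1), of "kapply (kadj B)"]
      by auto
    have rows: "W0 c \<in> fspan G" for c
    proof -
      have "W0 c = kapply (kadj B) (kapply (kunvec U) (\<lambda>a. cnj (A a c)))"
        unfolding W0_def using W_row[OF A B U] by auto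
      moreover have "kapply (kunvec U) (\<lambda>a. cnj (A a c)) \<in> fspan S"
        using S(4) l2_cnj[OF hs_fub(2)[OF A]] by blast
      ultimately show ?thesis unfolding G_def using fspan_map[OF hs_kadj[OF B] S(1,2)] by auto
    qed
    show ?thesis by (rule rowcase[OF G rows])
  qed
  then show ?thesis unfolding U_def[symmetric] using dW nW by simp
qed

lemma inv_enat_nonneg: "inv_enat n \<ge> 0"
  by (cases n) (auto simp: inv_enat_def)

lemma main_bound:
  assumes e: "onb e" and w: "w \<in> l2" and A: "hs A" and B: "hs B" and F: "finite F"
  shows "bound_const e w A B * (cmod (infsum (\<lambda>c. Wv A B (Uc e w F c0) (c,c)) UNIV))^2
          \<le> sqn (Wv A B (Uc e w F c0))"
proof -
  define t where "t = (cmod (infsum (\<lambda>c. Wv A B (Uc e w F c0) (c,c)) UNIV))^2"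
  define s where "s = sqn (Wv A B (Uc e w F c0))"
  have s0: "s \<ge> 0" by (simp add: s_def sqn_nonneg)
  define M where "M = min (krank (kcomp A (kadj A))) (min (krank (kcomp B (kadj B))) (rstar e w))"
  have bc: "bound_const e w A B = inv_enat M" by (simp add: bound_const_def M_def)
  show ?thesis
  proof (cases M)
    case (enat m)
    have r: "krank (kcomp A (kadj A)) \<le> enat m \<or> krank (kcomp B (kadj B)) \<le> enat m \<or> rstar e w \<le> enat m"
      using enat unfolding M_def by (auto simp: min_def split: if_splits)
    have tb: "t \<le> real m * s" unfolding t_def s_def by (rule trace_rank[OF e w A B F r])
    show ?thesis
    proof (cases "m = 0")
      case True then show ?thesis using s0 by (simp add: bc enat inv_enat_def s_def)
    next
      case False
      have "inv_enat M * t = t / real m" by (simp add: enat inv_enat_def)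
      also have "\<dots> \<le> s" using tb False by (simp add: divide_le_eq mult.commute)
      finally show ?thesis by (simp add: bc t_def s_def)
    qed
  next
    case infinity
    then show ?thesis using s0 by (simp add: bc inv_enat_def s_def)
  qed
qed



lemma qform_star_gen:
  fixes e :: "'i \<Rightarrow> 'k \<Rightarrow> complex" and w :: "'k \<times> ('a \<times> 'b) \<Rightarrow> complex"
    and A :: "'a \<Rightarrow> 'c \<Rightarrow> complex" and B :: "'b \<Rightarrow> 'c \<Rightarrow> complex"
  assumes e: "onb e" and w: "w \<in> l2" and A: "hs A" and B: "hs B" and F: "finite F"
  shows "(\<Sum>i\<in>F. \<Sum>j\<in>F. cnj (d i) * star (theta w w) e (kcomp A (kadj A)) (kcomp B (kadj B)) i j * c j)
       = linner (Wv A B (Uc e w F c)) (Wv A B (Uc e w F d))"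
proof -
  define Wj where "Wj j = Wv A B (coeff_vec e w j)" for j
  have Wl: "Wj j \<in> l2" for j unfolding Wj_def by (rule Wv_l2(1)[OF A B u_l2[OF e w]])
  have lin: "Wv A B (Uc e w F x) = (\<lambda>g. \<Sum>j\<in>F. x j * Wj j g)" for x
    unfolding Uc_def Wj_def by (rule Wv_lin[OF A B F u_l2[OF e w]])
  have Dl: "(\<lambda>g. \<Sum>i\<in>F. d i * Wj i g) \<in> l2" by (rule l2_sum[OF F]) (use Wl l2_scale in auto)
  have "linner (Wv A B (Uc e w F c)) (Wv A B (Uc e w F d))
      = linner (\<lambda>g. \<Sum>j\<in>F. c j * Wj j g) (\<lambda>g. \<Sum>i\<in>F. d i * Wj i g)" by (simp add: lin)
  also have "\<dots> = (\<Sum>j\<in>F. linner (\<lambda>g. c j * Wj j g) (\<lambda>g. \<Sum>i\<in>F. d i * Wj i g))"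
    by (rule linner_sum_left[OF F _ Dl]) (use Wl l2_scale in auto)
  also have "\<dots> = (\<Sum>j\<in>F. c j * (\<Sum>i\<in>F. linner (Wj j) (\<lambda>g. d i * Wj i g)))"
  proof (rule sum.cong[OF refl])
    fix j assume "j \<in> F"
    have "linner (Wj j) (\<lambda>g. \<Sum>i\<in>F. d i * Wj i g) = (\<Sum>i\<in>F. linner (Wj j) (\<lambda>g. d i * Wj i g))"
      by (rule linner_sum_right[OF F _ Wl]) (use Wl l2_scale in auto)
    then show "linner (\<lambda>g. c j * Wj j g) (\<lambda>g. \<Sum>i\<in>F. d i * Wj i g)
        = c j * (\<Sum>i\<in>F. linner (Wj j) (\<lambda>g. d i * Wj i g))" by (simp add: linner_scale_left)
  qed
  also have "\<dots> = (\<Sum>j\<in>F. c j * (\<Sum>i\<in>F. cnj (d i) * linner (Wj j) (Wj i)))"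
    by (simp add: linner_scale_right)
  also have "\<dots> = (\<Sum>j\<in>F. \<Sum>i\<in>F. cnj (d i) * linner (Wj j) (Wj i) * c j)"
    by (simp add: sum_distrib_left ac_simps)
  also have "\<dots> = (\<Sum>i\<in>F. \<Sum>j\<in>F. cnj (d i) * linner (Wj j) (Wj i) * c j)"
    by (rule sum.swap)
  also have "\<dots> = (\<Sum>i\<in>F. \<Sum>j\<in>F. cnj (d i) * star (theta w w) e (kcomp A (kadj A)) (kcomp B (kadj B)) i j * c j)"
    by (simp add: star_entry[OF e w A B] Wj_def)
  finally show ?thesis by simp
qed

lemma qform_theta:
  "qform (theta_coord r) F c = complex_of_real ((cmod (\<Sum>j\<in>F. c j * cnj (r j)))^2)"
proof -
  define S where "S = (\<Sum>j\<in>F. c j * cnj (r j))"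
  have "qform (theta_coord r) F c = (\<Sum>i\<in>F. cnj (c i) * r i) * (\<Sum>j\<in>F. cnj (r j) * c j)"
    unfolding qform_def theta_coord_def sum_product by (simp add: ac_simps)
  also have "(\<Sum>i\<in>F. cnj (c i) * r i) = cnj S" by (simp add: S_def)
  also have "(\<Sum>j\<in>F. cnj (r j) * c j) = S" by (simp add: S_def mult.commute)
  also have "cnj S * S = complex_of_real ((cmod S)^2)"
    by (simp only: mult.commute[of "cnj S"]) (rule complex_norm_square[symmetric])
  finally show ?thesis by (simp add: S_def)
qed

lemma rho_sum:
  fixes e :: "'i \<Rightarrow> 'k \<Rightarrow> complex" and w :: "'k \<times> ('a \<times> 'b) \<Rightarrow> complex"
    and A :: "'a \<Rightarrow> 'c \<Rightarrow> complex" and B :: "'b \<Rightarrow> 'c \<Rightarrow> complex"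
  assumes e: "onb e" and w: "w \<in> l2" and A: "hs A" and B: "hs B" and F: "finite F"
  shows "(\<Sum>j\<in>F. c j * cnj (rho e w A B j)) = infsum (\<lambda>x. Wv A B (Uc e w F c) (x,x)) UNIV"
proof -
  define v where "v = kvec (kcomp B (ksharp A))"
  have vl: "v \<in> l2" unfolding v_def by (rule v_bound(1)[OF A B])
  have "(\<Sum>j\<in>F. c j * cnj (rho e w A B j)) = (\<Sum>j\<in>F. linner (\<lambda>h. c j * coeff_vec e w j h) v)"
    by (simp add: rho_def v_def linner_scale_left linner_cnj[of _ "coeff_vec e w _"])
  also have "\<dots> = linner (Uc e w F c) v"
    unfolding Uc_def by (rule linner_sum_left[OF F _ vl, symmetric]) (use u_l2[OF e w] l2_scale in auto)
  also have "\<dots> = infsum (\<lambda>x. Wv A B (Uc e w F c) (x,x)) UNIV"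
    unfolding v_def by (rule trace_identity(2)[OF A B Uc_l2[OF e w F]])
  finally show ?thesis .
qed

lemma qform_diff:
  "qform (\<lambda>i j. M i j - complex_of_real k * N i j) F c = qform M F c - complex_of_real k * qform N F c"
  unfolding qform_def
  by (simp add: right_diff_distrib left_diff_distrib sum_subtractf sum_distrib_left ac_simps)

lemma part_star_ineq:
  fixes e :: "'i \<Rightarrow> 'k \<Rightarrow> complex" and w :: "'k \<times> ('a \<times> 'b) \<Rightarrow> complex"
    and A :: "'a \<Rightarrow> 'c \<Rightarrow> complex" and B :: "'b \<Rightarrow> 'c \<Rightarrow> complex"
  assumes e: "onb e" and w: "w \<in> l2" and A: "hs A" and B: "hs B"
  shows "star_ineq e w A B (bound_const e w A B)"
  unfolding star_ineq_def opge_def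
proof (intro allI impI)
  fix F :: "'i set" and c :: "'i \<Rightarrow> complex" assume F: "finite F"
  define k where "k = bound_const e w A B"
  define s where "s = sqn (Wv A B (Uc e w F c))"
  define t where "t = (cmod (infsum (\<lambda>x. Wv A B (Uc e w F c) (x,x)) UNIV))^2"
  have q1: "qform (star (theta w w) e (kcomp A (kadj A)) (kcomp B (kadj B))) F c = complex_of_real s"
    unfolding qform_def s_def qform_star_gen[OF e w A B F]
    by (rule linner_self[OF Wv_l2(1)[OF A B Uc_l2[OF e w F]]])
  have q2: "qform (theta_coord (rho e w A B)) F c = complex_of_real t"
    unfolding qform_theta t_def rho_sum[OF e w A B F] ..
  have mb: "k * t \<le> s" unfolding k_def t_def s_def by (rule main_bound[OF e w A B F])
  have "qform (\<lambda>i j. star (theta w w) e (kcomp A (kadj A)) (kcomp B (kadj B)) i j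
        - complex_of_real k * theta_coord (rho e w A B) i j) F c = complex_of_real (s - k * t)"
    by (simp add: qform_diff q1 q2)
  then show "Im (qform (\<lambda>i j. star (theta w w) e (kcomp A (kadj A)) (kcomp B (kadj B)) i j
        - complex_of_real (bound_const e w A B) * theta_coord (rho e w A B) i j) F c) = 0 \<and>
      0 \<le> Re (qform (\<lambda>i j. star (theta w w) e (kcomp A (kadj A)) (kcomp B (kadj B)) i j
        - complex_of_real (bound_const e w A B) * theta_coord (rho e w A B) i j) F c)"
    using mb by (simp add: k_def)
qed

lemma part_theta_pos:
  fixes e :: "'i \<Rightarrow> 'k \<Rightarrow> complex" and w :: "'k \<times> ('a \<times> 'b) \<Rightarrow> complex"
    and A :: "'a \<Rightarrow> 'c \<Rightarrow> complex" and B :: "'b \<Rightarrow> 'c \<Rightarrow> complex"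
  shows "opge (\<lambda>i j. complex_of_real (bound_const e w A B) * theta_coord (rho e w A B) i j) (\<lambda>i j. 0)"
  unfolding opge_def
proof (intro allI impI)
  fix F :: "'i set" and c :: "'i \<Rightarrow> complex" assume F: "finite F"
  have "qform (\<lambda>i j. complex_of_real (bound_const e w A B) * theta_coord (rho e w A B) i j - 0) F c
      = complex_of_real (bound_const e w A B) * qform (theta_coord (rho e w A B)) F c"
    unfolding qform_def by (simp add: sum_distrib_left ac_simps)
  also have "\<dots> = complex_of_real (bound_const e w A B * (cmod (\<Sum>j\<in>F. c j * cnj (rho e w A B j)))^2)"
    by (simp add: qform_theta)
  finally show "Im (qform (\<lambda>i j. complex_of_real (bound_const e w A B) * theta_coord (rho e w A B) i j - 0) F c) = 0 \<and>
      0 \<le> Re (qform (\<lambda>i j. complex_of_real (bound_const e w A B) * theta_coord (rho e w A B) i j - 0) F c)"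
    using inv_enat_nonneg by (simp add: bound_const_def)
qed

lemma part_bounded:
  fixes e :: "'i \<Rightarrow> 'k \<Rightarrow> complex" and w :: "'k \<times> ('a \<times> 'b) \<Rightarrow> complex"
    and A :: "'a \<Rightarrow> 'c \<Rightarrow> complex" and B :: "'b \<Rightarrow> 'c \<Rightarrow> complex"
  assumes e: "onb e" and w: "w \<in> l2" and A: "hs A" and B: "hs B"
  shows "bounded_form (star (theta w w) e (kcomp A (kadj A)) (kcomp B (kadj B)))"
  unfolding bounded_form_def
proof (intro exI allI impI)
  fix F :: "'i set" and c d :: "'i \<Rightarrow> complex" assume F: "finite F"
  define K where "K = hsN A * hsN B * sqn w"
  have K0: "K \<ge> 0" unfolding K_def by (simp add: hsN_nonneg sqn_nonneg)
  have Wb: "sqn (Wv A B (Uc e w F x)) \<le> K * (\<Sum>i\<in>F. (cmod (x i))^2)" for x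
  proof -
    have "sqn (Wv A B (Uc e w F x)) \<le> hsN A * hsN B * sqn (Uc e w F x)"
      by (rule Wv_l2(2)[OF A B Uc_l2[OF e w F]])
    also have "\<dots> \<le> hsN A * hsN B * (sqn w * (\<Sum>j\<in>F. (cmod (x j))^2))"
      by (rule mult_left_mono[OF Uc_sqn[OF e w F]]) (simp add: hsN_nonneg)
    finally show ?thesis by (simp add: K_def ac_simps)
  qed
  have "cmod (\<Sum>i\<in>F. \<Sum>j\<in>F. cnj (d i) * star (theta w w) e (kcomp A (kadj A)) (kcomp B (kadj B)) i j * c j)
      = cmod (linner (Wv A B (Uc e w F c)) (Wv A B (Uc e w F d)))"
    by (simp add: qform_star_gen[OF e w A B F])
  also have "\<dots> \<le> sqrt (sqn (Wv A B (Uc e w F c))) * sqrt (sqn (Wv A B (Uc e w F d)))"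
    by (rule linner_cs[OF Wv_l2(1)[OF A B Uc_l2[OF e w F]] Wv_l2(1)[OF A B Uc_l2[OF e w F]]])
  also have "\<dots> \<le> sqrt (K * (\<Sum>i\<in>F. (cmod (c i))^2)) * sqrt (K * (\<Sum>i\<in>F. (cmod (d i))^2))"
    by (intro mult_mono real_sqrt_le_mono Wb) (auto simp: sqn_nonneg intro!: mult_nonneg_nonneg K0 sum_nonneg)
  also have "\<dots> = K * sqrt (\<Sum>i\<in>F. (cmod (c i))^2) * sqrt (\<Sum>i\<in>F. (cmod (d i))^2)"
    using K0 by (simp add: real_sqrt_mult)
  finally show "cmod (\<Sum>i\<in>F. \<Sum>j\<in>F. cnj (d i) * star (theta w w) e (kcomp A (kadj A)) (kcomp B (kadj B)) i j * c j)
      \<le> K * sqrt (\<Sum>i\<in>F. (cmod (c i))^2) * sqrt (\<Sum>i\<in>F. (cmod (d i))^2)" .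
qed

lemma hs_norm_theta:
  assumes "w \<in> l2"
  shows "hs_norm (theta w w) = sqn w"
proof -
  have "hsN (theta w w) = infsum (\<lambda>(p,q). (cmod (w p))^2 * (cmod (w q))^2) UNIV"
    unfolding hsN_def theta_def by (simp add: norm_mult power_mult_distrib)
  also have "\<dots> = sqn w * sqn w"
    using prod_nonneg_summable(2)[of "\<lambda>p. (cmod (w p))^2" "\<lambda>p. (cmod (w p))^2"] assms
    by (simp add: l2_iff sqn_def)
  finally show ?thesis by (simp add: hs_norm_hsN sqn_nonneg)
qed

lemma part_rho:
  fixes e :: "'i \<Rightarrow> 'k \<Rightarrow> complex" and w :: "'k \<times> ('a \<times> 'b) \<Rightarrow> complex"
    and A :: "'a \<Rightarrow> 'c \<Rightarrow> complex" and B :: "'b \<Rightarrow> 'c \<Rightarrow> complex"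
  assumes e: "onb e" and w: "w \<in> l2" and A: "hs A" and B: "hs B"
  shows "(\<lambda>i. (cmod (rho e w A B i))^2) summable_on UNIV"
    and "sqrt (infsum (\<lambda>i. (cmod (rho e w A B i))^2) UNIV)
        \<le> hs_norm A * hs_norm B * sqrt (hs_norm (theta w w))"
proof -
  define K where "K = sqn w * (hsN A * hsN B)"
  have K0: "K \<ge> 0" unfolding K_def by (simp add: hsN_nonneg sqn_nonneg)
  define v where "v = kvec (kcomp B (ksharp A))"
  have vl: "v \<in> l2" unfolding v_def by (rule v_bound(1)[OF A B])
  have vb: "sqn v \<le> hsN A * hsN B" unfolding v_def by (rule v_bound(2)[OF A B])
  have fin: "(\<Sum>i\<in>F. (cmod (rho e w A B i))^2) \<le> K" if F: "finite F" for F
  proof -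
    define r where "r = rho e w A B"
    define sF where "sF = (\<Sum>i\<in>F. (cmod (r i))^2)"
    have sF0: "sF \<ge> 0" unfolding sF_def by (simp add: sum_nonneg)
    have "complex_of_real sF = (\<Sum>j\<in>F. r j * cnj (r j))"
    proof -
      have "\<And>j. r j * cnj (r j) = complex_of_real ((cmod (r j))^2)"
        by (rule complex_norm_square[symmetric])
      then show ?thesis unfolding sF_def by (simp only: of_real_sum)
    qed
    also have "\<dots> = (\<Sum>j\<in>F. linner (\<lambda>h. r j * coeff_vec e w j h) v)"
      by (simp add: r_def rho_def v_def linner_scale_left linner_cnj[of _ "coeff_vec e w _"])
    also have "\<dots> = linner (Uc e w F r) v"
      unfolding Uc_def by (rule linner_sum_left[OF F _ vl, symmetric]) (use u_l2[OF e w] l2_scale in auto)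
    finally have eq: "complex_of_real sF = linner (Uc e w F r) v" .
    have "sF = cmod (linner (Uc e w F r) v)" using eq[symmetric] sF0 by simp
    also have "\<dots> \<le> sqrt (sqn (Uc e w F r)) * sqrt (sqn v)"
      by (rule linner_cs[OF Uc_l2[OF e w F] vl])
    also have "\<dots> \<le> sqrt (sqn w * sF) * sqrt (hsN A * hsN B)"
      by (intro mult_mono real_sqrt_le_mono) (use Uc_sqn[OF e w F, of r] vb in \<open>auto simp: sF_def sqn_nonneg intro!: mult_nonneg_nonneg sum_nonneg\<close>)
    also have "\<dots> = sqrt sF * sqrt K" by (simp add: K_def real_sqrt_mult)
    finally have le: "sF \<le> sqrt sF * sqrt K" .
    have "sqrt sF \<le> sqrt K"
    proof (cases "sF = 0")
      case True then show ?thesis using K0 by simp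
    next
      case False
      then have pos: "sqrt sF > 0" using sF0 by simp
      have h: "sqrt sF * sqrt sF \<le> sqrt sF * sqrt K" using le sF0 by simp
      show ?thesis using mult_le_cancel_left_pos[OF pos] h by blast
    qed
    then show ?thesis using sF0 K0 by (simp add: sF_def r_def)
  qed
  show s: "(\<lambda>i. (cmod (rho e w A B i))^2) summable_on UNIV"
    by (rule nonneg_bdd_above_summable_on) (use fin in \<open>auto intro!: bdd_aboveI\<close>)
  have "infsum (\<lambda>i. (cmod (rho e w A B i))^2) UNIV \<le> K"
    by (rule infsum_le_finite_sums[OF s]) (use fin in auto)
  then have "sqrt (infsum (\<lambda>i. (cmod (rho e w A B i))^2) UNIV) \<le> sqrt K" by simp
  also have "sqrt K = hs_norm A * hs_norm B * sqrt (hs_norm (theta w w))"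
    unfolding hs_norm_theta[OF w] by (simp add: K_def hs_norm_hsN real_sqrt_mult)
  finally show "sqrt (infsum (\<lambda>i. (cmod (rho e w A B i))^2) UNIV)
        \<le> hs_norm A * hs_norm B * sqrt (hs_norm (theta w w))" .
qed



lemma infsum_single:
  fixes f :: "'x \<Rightarrow> 'b::{comm_monoid_add, t2_space}"
  assumes "\<And>x. x \<noteq> xz \<Longrightarrow> f x = 0"
  shows "infsum f UNIV = f xz"
proof -
  have "infsum f UNIV = infsum f {xz}" by (rule infsum_cong_neutral) (use assms in auto)
  then show ?thesis by simp
qed

lemma single_summable:
  fixes f :: "'x \<Rightarrow> 'b::{comm_monoid_add, topological_space}"
  assumes "\<And>x. x \<noteq> xz \<Longrightarrow> f x = 0"
  shows "f summable_on UNIV"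
  by (rule finite_nonzero_values_imp_summable_on) (rule finite_subset[of _ "{xz}"], use assms in auto)

definition unitk :: "'a \<Rightarrow> 'c \<Rightarrow> 'a \<Rightarrow> 'c \<Rightarrow> complex" where
  "unitk a0 c0 = (\<lambda>a c. if a = a0 \<and> c = c0 then 1 else 0)"

definition delt :: "'a \<Rightarrow> complex \<Rightarrow> 'a \<Rightarrow> complex" where
  "delt a0 t = (\<lambda>a. if a = a0 then t else 0)"

lemma hs_unitk: "hs (unitk a0 c0)"
  unfolding hs_def by (rule single_summable[where xz="(a0,c0)"]) (auto simp: unitk_def split: if_splits)

lemma unitk_nz: "unitk a0 c0 \<noteq> (\<lambda>_ _. 0)"
  by (auto simp: unitk_def fun_eq_iff)

lemma delt_l2: "delt a0 t \<in> l2"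
  unfolding l2_iff by (rule single_summable[where xz=a0]) (auto simp: delt_def)

lemma gram_unitk: "kcomp (unitk a0 c0) (kadj (unitk a0 c0)) = (\<lambda>a a'. if a = a0 \<and> a' = a0 then 1 else 0)"
proof (intro ext)
  fix a a'
  show "kcomp (unitk a0 c0) (kadj (unitk a0 c0)) a a' = (if a = a0 \<and> a' = a0 then 1 else 0)"
    unfolding kcomp_def kadj_def
    by (subst infsum_single[where xz=c0]) (auto simp: unitk_def)
qed

lemma kapply_P0: "kapply (\<lambda>a a'. if a = a0 \<and> a' = a0 then 1 else 0) x = delt a0 (x a0)"
proof
  fix a
  show "kapply (\<lambda>a a'. if a = a0 \<and> a' = a0 then 1 else 0) x a = delt a0 (x a0) a"
    unfolding kapply_def delt_def by (subst infsum_single[where xz=a0]) auto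
qed

lemma lin_indep_single:
  assumes "y \<noteq> (\<lambda>_. 0)"
  shows "lin_indep_fun {y}"
  using assms by (auto simp: lin_indep_fun_def fun_eq_iff)

lemma krank_P0: "krank (\<lambda>a a'. if a = (a0::'a) \<and> a' = a0 then 1 else 0) = enat 1"
proof (rule antisym)
  let ?P = "\<lambda>a a'. if a = a0 \<and> a' = a0 then 1 else (0::complex)"
  have rng: "kapply ?P ` l2 \<subseteq> range (delt a0)" by (auto simp: kapply_P0)
  have bnd: "card S \<le> 1" if S: "finite S" "S \<subseteq> kapply ?P ` l2" "lin_indep_fun S" for S
  proof (rule ccontr)
    assume "\<not> card S \<le> 1"
    then have "card S \<ge> 2" by simp
    then have "S \<noteq> {}" by auto
    then obtain s1 where s1: "s1 \<in> S" by blast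
    have "card (S - {s1}) \<ge> 1" using card_Diff_singleton[OF s1] \<open>card S \<ge> 2\<close> by simp
    then have "S - {s1} \<noteq> {}" by (metis card.empty not_one_le_zero)
    then obtain s2 where s2: "s2 \<in> S - {s1}" by blast
    have s: "s1 \<in> S" "s2 \<in> S" "s1 \<noteq> s2" using s1 s2 by auto
    obtain t1 where t1: "s1 = delt a0 t1" using s(1) S(2) rng by blast
    obtain t2 where t2: "s2 = delt a0 t2" using s(2) S(2) rng by blast
    define d where "d s = (if s = s1 then t2 else if s = s2 then - t1 else 0)" for s
    have "(\<lambda>p. \<Sum>s\<in>S. d s * s p) = (\<lambda>_. 0)"
    proof
      fix p
      have "(\<Sum>s\<in>S. d s * s p) = (\<Sum>s\<in>S. (if s = s1 then t2 * s1 p else 0) + (if s = s2 then - t1 * s2 p else 0))"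
        by (rule sum.cong) (auto simp: d_def s(3))
      also have "\<dots> = t2 * s1 p - t1 * s2 p" using S(1) s by (simp add: sum.distrib)
      also have "\<dots> = 0" by (simp add: t1 t2 delt_def)
      finally show "(\<Sum>s\<in>S. d s * s p) = 0" .
    qed
    then have "\<forall>s\<in>S. d s = 0" using spec[OF S(3)[unfolded lin_indep_fun_def], of d] by simp
    then have "d s1 = 0" "d s2 = 0" using s by auto
    then have "t2 = 0" "t1 = 0" using s(3) by (auto simp: d_def)
    then show False using s(3) t1 t2 by simp
  qed
  show "krank ?P \<le> enat 1" unfolding krank_def
    by (rule Sup_least) (use bnd in auto)
  have one: "delt a0 1 \<in> kapply ?P ` l2"
    using kapply_P0[of a0 "delt a0 1"] delt_l2[of a0 1] by (force simp: delt_def)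
  have li: "lin_indep_fun {delt a0 1}"
    by (rule lin_indep_single) (auto simp: delt_def fun_eq_iff)
  show "enat 1 \<le> krank ?P" unfolding krank_def
    by (rule Sup_upper) (use one li in \<open>auto intro!: exI[of _ "{delt a0 1}"]\<close>)
qed

lemma Wv_unit:
  "Wv (unitk a0 c0) (unitk b0 c0) U g = (if g = (c0,c0) then U (a0,b0) else 0)"
  unfolding Wv_def Kf_def
  by (subst infsum_single[where xz="(a0,b0)"]) (auto simp: unitk_def prod_eq_iff)

lemma part_sharp:
  fixes e :: "'i \<Rightarrow> 'k \<Rightarrow> complex" and w :: "'k \<times> ('a \<times> 'b) \<Rightarrow> complex"
  assumes e: "onb e" and w: "w \<in> l2" and wn: "w \<noteq> (\<lambda>_. 0)"
  shows "\<exists>(A' :: 'a \<Rightarrow> 'c \<Rightarrow> complex) (B' :: 'b \<Rightarrow> 'c \<Rightarrow> complex).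
         hs A' \<and> A' \<noteq> (\<lambda>_ _. 0) \<and> hs B' \<and> B' \<noteq> (\<lambda>_ _. 0)
         \<and> (\<forall>c::real. c > bound_const e w A' B' \<longrightarrow> \<not> star_ineq e w A' B' c)"
proof -
  obtain z0 where z0: "w z0 \<noteq> 0" using wn by (auto simp: fun_eq_iff)
  obtain k0 a0 b0 where zz: "z0 = (k0, (a0, b0))" by (metis prod.collapse)
  define wh where "wh = (\<lambda>k. w (k,(a0,b0)))"
  have whl: "wh \<in> l2" unfolding wh_def by (rule w_slice(1)[OF w])
  have whn: "wh \<noteq> (\<lambda>_. 0)" using z0 zz by (auto simp: wh_def fun_eq_iff)
  obtain i0 where i0: "linner wh (e i0) \<noteq> 0"
    using e whl whn unfolding onb_def by blast
  define u0 where "u0 = coeff_vec e w i0"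
  have t0: "u0 (a0,b0) \<noteq> 0" using i0 by (simp add: u0_def coeff_lin wh_def)
  define c0 :: 'c where "c0 = undefined"
  define A' where "A' = unitk a0 c0"
  define B' where "B' = unitk b0 c0"
  have hA: "hs A'" "A' \<noteq> (\<lambda>_ _. 0)" by (simp_all add: A'_def hs_unitk unitk_nz)
  have hB: "hs B'" "B' \<noteq> (\<lambda>_ _. 0)" by (simp_all add: B'_def hs_unitk unitk_nz)
  have rA: "krank (kcomp A' (kadj A')) = enat 1" by (simp add: A'_def gram_unitk krank_P0)
  have rB: "krank (kcomp B' (kadj B')) = enat 1" by (simp add: B'_def gram_unitk krank_P0)
  define cc :: "'i \<Rightarrow> complex" where "cc = (\<lambda>_. 1)"
  have Ue: "Uc e w {i0} cc = u0" by (simp add: Uc_def cc_def u0_def)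
  have rS: "enat 1 \<le> rstar e w"
  proof -
    have mem: "u0 \<in> Uspace e w" using uspace_mem[OF e w, of "{i0}" cc] Ue by simp
    define y where "y = kapply (kunvec u0) (delt a0 1)"
    have yv: "y b = u0 (a0,b)" for b
      unfolding y_def kapply_def kunvec_def delt_def by (subst infsum_single[where xz=a0]) auto
    have yn: "y \<noteq> (\<lambda>_. 0)"
    proof
      assume "y = (\<lambda>_. 0)"
      then have "y b0 = 0" by simp
      with yv[of b0] t0 show False by simp
    qed
    have "enat 1 \<le> krank (kunvec u0)" unfolding krank_def
      by (rule Sup_upper) (use delt_l2[of a0 1] lin_indep_single[OF yn] in \<open>auto simp: y_def intro!: exI[of _ "{y}"]\<close>)
    also have "\<dots> \<le> rstar e w" unfolding rstar_def by (rule SUP_upper[OF mem])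
    finally show ?thesis .
  qed
  have bc: "bound_const e w A' B' = 1"
  proof -
    have "min (krank (kcomp A' (kadj A'))) (min (krank (kcomp B' (kadj B'))) (rstar e w)) = enat 1"
      using rS by (simp add: rA rB min_def)
    then show ?thesis by (simp add: bound_const_def inv_enat_def)
  qed
  have notineq: "\<not> star_ineq e w A' B' c" if c: "c > 1" for c
  proof
    assume si: "star_ineq e w A' B' c"
    define t where "t = (cmod (u0 (a0,b0)))^2"
    have tp: "t > 0" using t0 by (simp add: t_def)
    have q1: "qform (star (theta w w) e (kcomp A' (kadj A')) (kcomp B' (kadj B'))) {i0} cc
        = complex_of_real (sqn (Wv A' B' u0))"
    proof -
      have "qform (star (theta w w) e (kcomp A' (kadj A')) (kcomp B' (kadj B'))) {i0} cc
          = linner (Wv A' B' (Uc e w {i0} cc)) (Wv A' B' (Uc e w {i0} cc))"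
        unfolding qform_def by (rule qform_star_gen[OF e w hA(1) hB(1)]) simp
      also have "\<dots> = complex_of_real (sqn (Wv A' B' u0))"
        unfolding Ue u0_def by (rule linner_self[OF Wv_l2(1)[OF hA(1) hB(1) u_l2[OF e w]]])
      finally show ?thesis .
    qed
    have sq: "sqn (Wv A' B' u0) = t"
      unfolding sqn_def A'_def B'_def Wv_unit t_def
      by (subst infsum_single[where xz="(c0,c0)"]) auto
    have q2: "qform (theta_coord (rho e w A' B')) {i0} cc = complex_of_real t"
    proof -
      have "qform (theta_coord (rho e w A' B')) {i0} cc
          = complex_of_real ((cmod (infsum (\<lambda>x. Wv A' B' u0 (x,x)) UNIV))^2)"
      proof -
        have r: "(\<Sum>j\<in>{i0}. cc j * cnj (rho e w A' B' j)) = infsum (\<lambda>x. Wv A' B' (Uc e w {i0} cc) (x,x)) UNIV"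
          by (rule rho_sum[OF e w hA(1) hB(1)]) simp
        show ?thesis unfolding qform_theta r Ue ..
      qed
      also have "infsum (\<lambda>x. Wv A' B' u0 (x,x)) UNIV = u0 (a0,b0)"
        unfolding A'_def B'_def Wv_unit by (subst infsum_single[where xz=c0]) auto
      finally show ?thesis by (simp add: t_def)
    qed
    have "qform (\<lambda>i j. star (theta w w) e (kcomp A' (kadj A')) (kcomp B' (kadj B')) i j
        - complex_of_real c * theta_coord (rho e w A' B') i j) {i0} cc = complex_of_real (t - c * t)"
      by (simp add: qform_diff q1 q2 sq)
    moreover have "0 \<le> Re (qform (\<lambda>i j. star (theta w w) e (kcomp A' (kadj A')) (kcomp B' (kadj B')) i j
        - complex_of_real c * theta_coord (rho e w A' B') i j) {i0} cc)"
      using si unfolding star_ineq_def opge_def by blast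
    ultimately have "0 \<le> t - c * t" by simp
    moreover have "c * t > 1 * t" using c tp by (intro mult_strict_right_mono) auto
    ultimately show False by simp
  qed
  show ?thesis
    by (rule exI[of _ A'], rule exI[of _ B']) (use hA hB bc notineq in auto)
qed

theorem theorem5p5:
  fixes e :: "'i \<Rightarrow> ('k \<Rightarrow> complex)"
    and w :: "'k \<times> ('a \<times> 'b) \<Rightarrow> complex"
    and A :: "'a \<Rightarrow> 'c \<Rightarrow> complex"
    and B :: "'b \<Rightarrow> 'c \<Rightarrow> complex"
  assumes "onb e"
    and "w \<in> l2" and "w \<noteq> (\<lambda>_. 0)"
    and "hs A" and "A \<noteq> (\<lambda>_ _. 0)"
    and "hs B" and "B \<noteq> (\<lambda>_ _. 0)"
  shows "(\<lambda>i. (cmod (rho e w A B i))^2) summable_on UNIV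
    \<and> sqrt (infsum (\<lambda>i. (cmod (rho e w A B i))^2) UNIV)
        \<le> hs_norm A * hs_norm B * sqrt (hs_norm (theta w w))
    \<and> bounded_form (star (theta w w) e (kcomp A (kadj A)) (kcomp B (kadj B)))
    \<and> star_ineq e w A B (bound_const e w A B)
    \<and> opge (\<lambda>i j. complex_of_real (bound_const e w A B) * theta_coord (rho e w A B) i j) (\<lambda>i j. 0)
    \<and> (\<exists>(A' :: 'a \<Rightarrow> 'c \<Rightarrow> complex) (B' :: 'b \<Rightarrow> 'c \<Rightarrow> complex).
         hs A' \<and> A' \<noteq> (\<lambda>_ _. 0) \<and> hs B' \<and> B' \<noteq> (\<lambda>_ _. 0)
         \<and> (\<forall>c::real. c > bound_const e w A' B' \<longrightarrow> \<not> star_ineq e w A' B' c))"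
  using part_rho[OF assms(1,2,4,6)] part_bounded[OF assms(1,2,4,6)]
    part_star_ineq[OF assms(1,2,4,6)] part_theta_pos[of e w A B] part_sharp[OF assms(1-3)]
  by blast


end
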